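(* Let $H=(E,\{X_i:i\in[n]\})$ be a hypergraph and $t_1,\dots,t_n$ integers with $0\le t_i\le|X_i|$ satisfying: (H1) every vertex lies in at least two hyperedges; (H2) $|X_i\cap X_j|\le1$ for all distinct $i,j$; (H3) there are no $a,b,c\in E$ with $\{a,b\},\{a,c\},\{b,c\}$ all hyperedges; (T) for each $i$, either $t_i=1$ or $\min\{w(e):e\in X_i\}\le t_i<|X_i|$. Let $\rho(A)=\sum_{i=1}^n\min\{|A\cap X_i|,t_i\}$ for $A\subseteq E$. If the line graph $G_H$ is $(k+1)$-critical, then $\rho$ is an excluded minor for $\mathcal{D}_k$.
   Context: A polymatroid on a finite set $E$ is a function $\rho:2^E\to\mathbb{Z}$ that is normalized, non-decreasing and submodular. A hypergraph is $H=(E,\mathcal{E})$ with $E$ finite and $\mathcal{E}=\{X_i:i\in[n]\}$ a set of nonempty subsets of $E$; $w(e)$ is the number of hyperedges containing $e$. The line graph $G_H$ has vertex set $[n]$ with $ij$ an edge iff $i\ne j$ and $X_i\cap X_j\ne\emptyset$. A graph is $(k+1)$-critical if it has chromatic number $k+1$ but deleting any single edge gives chromatic number $k$. $\mathcal{D}_k$ is the class of polymatroids that can be written as $r_{M_1}+\cdots+r_{M_k}$ for matroids $M_1,\dots,M_k$ on the ground set. For $A\subseteq E$, the deletion $\rho_{\backslash A}$ and contraction $\rho_{/A}$ on $E-A$ are $\rho_{\backslash A}(X)=\rho(X)$ and $\rho_{/A}(X)=\rho(X\cup A)-\rho(A)$; minors are $(\rho_{\backslash A})_{/B}$ for disjoint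 $A,B$, proper if $A\cup B\ne\emptyset$. An excluded minor for a minor-closed class is a polymatroid not in the class all of whose proper minors are in the class. *)

theory Defs
  imports Main
begin

definition polymatroid :: "'a set \<Rightarrow> ('a set \<Rightarrow> int) \<Rightarrow> bool" where
  "polymatroid E \<rho> \<longleftrightarrow> finite E \<and> \<rho> {} = 0
     \<and> (\<forall>X Y. X \<subseteq> Y \<and> Y \<subseteq> E \<longrightarrow> \<rho> X \<le> \<rho> Y)
     \<and> (\<forall>X Y. X \<subseteq> E \<and> Y \<subseteq> E \<longrightarrow> \<rho> (X \<union> Y) + \<rho> (X \<inter> Y) \<le> \<rho> X + \<rho> Y)"

definition matroid_rank :: "'a set \<Rightarrow> ('a set \<Rightarrow> int) \<Rightarrow> bool" where
  "matroid_rank E r \<longleftrightarrow> polymatroid E r \<and> (\<forall>X. X \<subseteq> E \<longrightarrow> r X \<le> int (card X))"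

definition in_D :: "nat \<Rightarrow> 'a set \<Rightarrow> ('a set \<Rightarrow> int) \<Rightarrow> bool" where
  "in_D k E \<rho> \<longleftrightarrow> (\<exists>r :: nat \<Rightarrow> 'a set \<Rightarrow> int.
      (\<forall>j<k. matroid_rank E (r j)) \<and> (\<forall>X. X \<subseteq> E \<longrightarrow> \<rho> X = (\<Sum>j<k. r j X)))"

text \<open>The minor (rho deleted A) contracted B, a function on ground set E - A - B.\<close>
definition minor_fun :: "('a set \<Rightarrow> int) \<Rightarrow> 'a set \<Rightarrow> 'a set \<Rightarrow> int" where
  "minor_fun \<rho> B = (\<lambda>X. \<rho> (X \<union> B) - \<rho> B)"

definition excluded_minor_D :: "nat \<Rightarrow> 'a set \<Rightarrow> ('a set \<Rightarrow> int) \<Rightarrow> bool" where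
  "excluded_minor_D k E \<rho> \<longleftrightarrow> polymatroid E \<rho> \<and> \<not> in_D k E \<rho>
     \<and> (\<forall>A B. A \<subseteq> E \<and> B \<subseteq> E \<and> A \<inter> B = {} \<and> A \<union> B \<noteq> {}
            \<longrightarrow> in_D k (E - A - B) (minor_fun \<rho> B))"

definition colourable :: "'v set \<Rightarrow> ('v \<Rightarrow> 'v \<Rightarrow> bool) \<Rightarrow> nat \<Rightarrow> bool" where
  "colourable V adj k \<longleftrightarrow> (\<exists>f :: 'v \<Rightarrow> nat. (\<forall>v\<in>V. f v < k)
      \<and> (\<forall>u\<in>V. \<forall>v\<in>V. adj u v \<longrightarrow> f u \<noteq> f v))"

definition chromatic_number :: "'v set \<Rightarrow> ('v \<Rightarrow> 'v \<Rightarrow> bool) \<Rightarrow> nat" where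
  "chromatic_number V adj = (LEAST k. colourable V adj k)"

definition delete_edge :: "('v \<Rightarrow> 'v \<Rightarrow> bool) \<Rightarrow> 'v \<Rightarrow> 'v \<Rightarrow> ('v \<Rightarrow> 'v \<Rightarrow> bool)" where
  "delete_edge adj u v = (\<lambda>x y. adj x y \<and> {x, y} \<noteq> {u, v})"

definition critical :: "nat \<Rightarrow> 'v set \<Rightarrow> ('v \<Rightarrow> 'v \<Rightarrow> bool) \<Rightarrow> bool" where
  "critical m V adj \<longleftrightarrow> chromatic_number V adj = m
     \<and> (\<forall>u\<in>V. \<forall>v\<in>V. adj u v \<longrightarrow> chromatic_number V (delete_edge adj u v) = m - 1)"

definition hypergraph :: "'a set \<Rightarrow> nat \<Rightarrow> (nat \<Rightarrow> 'a set) \<Rightarrow> bool" where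
  "hypergraph E n X \<longleftrightarrow> finite E \<and> inj_on X {1..n}
     \<and> (\<forall>i\<in>{1..n}. X i \<noteq> {} \<and> X i \<subseteq> E)"

definition hdeg :: "nat \<Rightarrow> (nat \<Rightarrow> 'a set) \<Rightarrow> 'a \<Rightarrow> nat" where
  "hdeg n X e = card {i \<in> {1..n}. e \<in> X i}"

definition line_graph_adj :: "(nat \<Rightarrow> 'a set) \<Rightarrow> nat \<Rightarrow> nat \<Rightarrow> bool" where
  "line_graph_adj X i j \<longleftrightarrow> i \<noteq> j \<and> X i \<inter> X j \<noteq> {}"

definition truncated_rho :: "nat \<Rightarrow> (nat \<Rightarrow> 'a set) \<Rightarrow> (nat \<Rightarrow> int) \<Rightarrow> 'a set \<Rightarrow> int" where
  "truncated_rho n X t A = (\<Sum>i\<in>{1..n}. min (int (card (A \<inter> X i))) (t i))"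

end

theory Submission
  imports Defs
begin

lemma trunc_mono:
  fixes s :: int
  assumes "finite Z" "A \<subseteq> C"
  shows "min (int (card (A \<inter> Z))) s \<le> min (int (card (C \<inter> Z))) s"
proof -
  have "card (A \<inter> Z) \<le> card (C \<inter> Z)" by (rule card_mono) (use assms in auto)
  then show ?thesis by linarith
qed

lemma trunc_submod:
  fixes s :: int
  assumes "finite Z"
  shows "min (int (card ((A \<union> C) \<inter> Z))) s + min (int (card (A \<inter> C \<inter> Z))) s
         \<le> min (int (card (A \<inter> Z))) s + min (int (card (C \<inter> Z))) s"
proof -
  have e: "card (A \<inter> Z) + card (C \<inter> Z) = card ((A \<inter> Z) \<union> (C \<inter> Z)) + card ((A \<inter> Z) \<inter> (C \<inter> Z))"
    by (rule card_Un_Int) (use assms in auto)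
  have e1: "(A \<inter> Z) \<union> (C \<inter> Z) = (A \<union> C) \<inter> Z" "(A \<inter> Z) \<inter> (C \<inter> Z) = A \<inter> C \<inter> Z" by auto
  have a: "card (A \<inter> C \<inter> Z) \<le> card (A \<inter> Z)" by (rule card_mono) (use assms in auto)
  have b: "card (A \<inter> C \<inter> Z) \<le> card (C \<inter> Z)" by (rule card_mono) (use assms in auto)
  have c: "card (A \<inter> Z) \<le> card ((A \<union> C) \<inter> Z)" by (rule card_mono) (use assms in auto)
  have d: "card (C \<inter> Z) \<le> card ((A \<union> C) \<inter> Z)" by (rule card_mono) (use assms in auto)
  from e e1 have "int (card ((A \<union> C) \<inter> Z)) + int (card (A \<inter> C \<inter> Z)) = int (card (A \<inter> Z)) + int (card (C \<inter> Z))"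
    by simp
  with a b c d show ?thesis by linarith
qed

definition sumtrunc :: "nat set \<Rightarrow> (nat \<Rightarrow> 'a set) \<Rightarrow> (nat \<Rightarrow> int) \<Rightarrow> 'a set \<Rightarrow> int" where
  "sumtrunc P Y s A = (\<Sum>p\<in>P. min (int (card (A \<inter> Y p))) (s p))"

lemma sumtrunc_polymatroid:
  assumes "finite E'" "finite P" "\<forall>p\<in>P. finite (Y p) \<and> 0 \<le> s p"
  shows "polymatroid E' (sumtrunc P Y s)"
  unfolding polymatroid_def
proof (intro conjI allI impI)
  show "finite E'" by fact
  show "sumtrunc P Y s {} = 0" unfolding sumtrunc_def using assms(3) by (auto intro: sum.neutral)
next
  fix A C assume "A \<subseteq> C \<and> C \<subseteq> E'"
  then show "sumtrunc P Y s A \<le> sumtrunc P Y s C" unfolding sumtrunc_def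
    using assms(3) by (intro sum_mono trunc_mono) auto
next
  fix A C assume "A \<subseteq> E' \<and> C \<subseteq> E'"
  have "sumtrunc P Y s (A \<union> C) + sumtrunc P Y s (A \<inter> C)
     = (\<Sum>p\<in>P. min (int (card ((A \<union> C) \<inter> Y p))) (s p) + min (int (card (A \<inter> C \<inter> Y p))) (s p))"
    unfolding sumtrunc_def by (simp add: sum.distrib)
  also have "\<dots> \<le> (\<Sum>p\<in>P. min (int (card (A \<inter> Y p))) (s p) + min (int (card (C \<inter> Y p))) (s p))"
    using assms(3) by (intro sum_mono trunc_submod) auto
  also have "\<dots> = sumtrunc P Y s A + sumtrunc P Y s C"
    unfolding sumtrunc_def by (simp add: sum.distrib)
  finally show "sumtrunc P Y s (A \<union> C) + sumtrunc P Y s (A \<inter> C) \<le> sumtrunc P Y s A + sumtrunc P Y s C" .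
qed

lemma sumtrunc_matroid:
  assumes "finite E'" "finite P" "\<forall>p\<in>P. finite (Y p) \<and> 0 \<le> s p"
    and disj: "\<forall>p\<in>P. \<forall>q\<in>P. p \<noteq> q \<longrightarrow> Y p \<inter> Y q = {}"
  shows "matroid_rank E' (sumtrunc P Y s)"
  unfolding matroid_rank_def
proof (intro conjI allI impI)
  show "polymatroid E' (sumtrunc P Y s)" using sumtrunc_polymatroid assms by blast
  fix A assume A: "A \<subseteq> E'"
  then have fA: "finite A" using assms(1) finite_subset by blast
  have "sumtrunc P Y s A \<le> (\<Sum>p\<in>P. int (card (A \<inter> Y p)))"
    unfolding sumtrunc_def by (intro sum_mono) auto
  also have "\<dots> = int (\<Sum>p\<in>P. card (A \<inter> Y p))" by simp
  also have "(\<Sum>p\<in>P. card (A \<inter> Y p)) = card (\<Union>p\<in>P. A \<inter> Y p)"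
    by (rule card_UN_disjoint[symmetric]) (use assms fA disj in auto)
  also have "card (\<Union>p\<in>P. A \<inter> Y p) \<le> card A" by (rule card_mono) (use fA in auto)
  finally show "sumtrunc P Y s A \<le> int (card A)" by simp
qed

lemma in_D_cong:
  assumes "in_D k E' f" "\<forall>A. A \<subseteq> E' \<longrightarrow> g A = f A"
  shows "in_D k E' g"
  using assms unfolding in_D_def by metis

lemma in_D_minor:
  assumes "in_D k E' f" "A \<subseteq> E'" "B \<subseteq> E'" "A \<inter> B = {}"
  shows "in_D k (E' - A - B) (minor_fun f B)"
proof -
  obtain r where r: "\<forall>j<k. matroid_rank E' (r j)" "\<forall>Z. Z \<subseteq> E' \<longrightarrow> f Z = (\<Sum>j<k. r j Z)"
    using assms(1) unfolding in_D_def by blast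
  let ?E = "E' - A - B"
  have m: "matroid_rank ?E (minor_fun (r j) B)" if j: "j < k" for j
  proof -
    have mr: "matroid_rank E' (r j)" using r(1) j by blast
    then have p: "polymatroid E' (r j)" and cb: "\<forall>Z. Z \<subseteq> E' \<longrightarrow> r j Z \<le> int (card Z)"
      unfolding matroid_rank_def by auto
    have fin: "finite E'" and z: "r j {} = 0"
      and mo: "\<forall>Z W. Z \<subseteq> W \<and> W \<subseteq> E' \<longrightarrow> r j Z \<le> r j W"
      and sm: "\<forall>Z W. Z \<subseteq> E' \<and> W \<subseteq> E' \<longrightarrow> r j (Z \<union> W) + r j (Z \<inter> W) \<le> r j Z + r j W"
      using p unfolding polymatroid_def by auto
    show ?thesis unfolding matroid_rank_def polymatroid_def minor_fun_def
    proof (intro conjI allI impI)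
      show "finite ?E" using fin by auto
      show "r j ({} \<union> B) - r j B = 0" by simp
    next
      fix Z W assume "Z \<subseteq> W \<and> W \<subseteq> ?E"
      then have "Z \<union> B \<subseteq> W \<union> B \<and> W \<union> B \<subseteq> E'" using assms(3) by auto
      then show "r j (Z \<union> B) - r j B \<le> r j (W \<union> B) - r j B" using mo by auto
    next
      fix Z W assume h: "Z \<subseteq> ?E \<and> W \<subseteq> ?E"
      have "r j ((Z \<union> B) \<union> (W \<union> B)) + r j ((Z \<union> B) \<inter> (W \<union> B)) \<le> r j (Z \<union> B) + r j (W \<union> B)"
        using sm[rule_format, of "Z \<union> B" "W \<union> B"] h assms(3) by auto
      moreover have "(Z \<union> B) \<union> (W \<union> B) = Z \<union> W \<union> B" "(Z \<union> B) \<inter> (W \<union> B) = Z \<inter> W \<union> B" by auto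
      ultimately show "r j (Z \<union> W \<union> B) - r j B + (r j (Z \<inter> W \<union> B) - r j B) \<le> r j (Z \<union> B) - r j B + (r j (W \<union> B) - r j B)"
        by simp
    next
      fix Z assume h: "Z \<subseteq> ?E"
      have "r j (Z \<union> B) + r j (Z \<inter> B) \<le> r j Z + r j B" using sm[rule_format, of Z B] h assms(3) by auto
      moreover have "Z \<inter> B = {}" using h by auto
      moreover have "r j Z \<le> int (card Z)" using cb h by auto
      ultimately show "r j (Z \<union> B) - r j B \<le> int (card Z)" using z by simp
    qed
  qed
  show ?thesis unfolding in_D_def
  proof (intro exI[of _ "\<lambda>j. minor_fun (r j) B"] conjI allI impI)
    fix j assume "j < k" then show "matroid_rank ?E (minor_fun (r j) B)" by (rule m)
  next
    fix Z assume h: "Z \<subseteq> ?E"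
    have "minor_fun f B Z = f (Z \<union> B) - f B" unfolding minor_fun_def by simp
    also have "\<dots> = (\<Sum>j<k. r j (Z \<union> B)) - (\<Sum>j<k. r j B)" using r(2)[rule_format, of "Z \<union> B"] r(2)[rule_format, of B] h assms(3) by auto
    also have "\<dots> = (\<Sum>j<k. minor_fun (r j) B Z)" unfolding minor_fun_def by (simp add: sum_subtractf)
    finally show "minor_fun f B Z = (\<Sum>j<k. minor_fun (r j) B Z)" .
  qed
qed

lemma colourable_id:
  assumes "\<forall>u v. adj u v \<longrightarrow> u \<noteq> v"
  shows "colourable {1..n} adj (Suc n)"
  unfolding colourable_def using assms by (intro exI[of _ id]) auto

lemma colourable_chromatic:
  assumes "colourable V adj m"
  shows "colourable V adj (chromatic_number V adj)"
  unfolding chromatic_number_def using assms by (rule LeastI)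

lemma chromatic_le:
  assumes "colourable V adj m"
  shows "chromatic_number V adj \<le> m"
  unfolding chromatic_number_def using assms by (rule Least_le)

lemma two_elems:
  assumes "finite S" "2 \<le> card S"
  shows "\<exists>a\<in>S. \<exists>b\<in>S. a \<noteq> b"
proof (rule ccontr)
  assume "\<not> ?thesis"
  then have "card S \<le> Suc 0" using card_le_Suc0_iff_eq[OF assms(1)] by blast
  with assms show False by simp
qed

locale hsetup =
  fixes E :: "'a set" and n :: nat and X :: "nat \<Rightarrow> 'a set" and t :: "nat \<Rightarrow> int"
  assumes hyp: "hypergraph E n X"
    and tge1: "\<forall>i\<in>{1..n}. 1 \<le> t i"
    and H1: "\<forall>e\<in>E. hdeg n X e \<ge> 2"
    and H2: "\<forall>i\<in>{1..n}. \<forall>j\<in>{1..n}. i \<noteq> j \<longrightarrow> card (X i \<inter> X j) \<le> 1"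
begin

lemma finE: "finite E" using hyp unfolding hypergraph_def by blast

lemma Xsub: "i \<in> {1..n} \<Longrightarrow> X i \<subseteq> E" using hyp unfolding hypergraph_def by blast

lemma Xne: "i \<in> {1..n} \<Longrightarrow> X i \<noteq> {}" using hyp unfolding hypergraph_def by blast

lemma finX: "i \<in> {1..n} \<Longrightarrow> finite (X i)" using Xsub finE finite_subset by blast

lemma rho_eq: "truncated_rho n X t = sumtrunc {1..n} X t"
  by (simp add: truncated_rho_def sumtrunc_def fun_eq_iff)

lemma rho_poly: "polymatroid E (truncated_rho n X t)"
  unfolding rho_eq using finE finX tge1
  by (intro sumtrunc_polymatroid) force+

lemma two_edges:
  assumes "e \<in> E"
  shows "\<exists>i\<in>{1..n}. \<exists>l\<in>{1..n}. i \<noteq> l \<and> e \<in> X i \<and> e \<in> X l"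
proof -
  have c2: "2 \<le> card {i \<in> {1..n}. e \<in> X i}" using H1 assms unfolding hdeg_def by blast
  have fin: "finite {i \<in> {1..n}. e \<in> X i}" by simp
  from two_elems[OF fin c2] obtain a b where "a \<in> {i \<in> {1..n}. e \<in> X i}" "b \<in> {i \<in> {1..n}. e \<in> X i}" "a \<noteq> b"
    by blast
  then show ?thesis by blast
qed

lemma inter_single:
  assumes "i \<in> {1..n}" "l \<in> {1..n}" "i \<noteq> l" "e \<in> X i" "e \<in> X l"
  shows "X i \<inter> X l = {e}"
proof -
  have "card (X i \<inter> X l) \<le> Suc 0" using H2 assms by auto
  moreover have fin: "finite (X i \<inter> X l)" using finX[OF assms(1)] by simp
  ultimately have "\<forall>a\<in>X i \<inter> X l. \<forall>b\<in>X i \<inter> X l. a = b"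
    using card_le_Suc0_iff_eq[OF fin] by blast
  then show ?thesis using assms by auto
qed

lemma colour_minus:
  assumes crit: "critical (k + 1) {1..n} (line_graph_adj X)" and e: "e \<in> E"
  shows "\<exists>f. (\<forall>p\<in>{1..n}. f p < k) \<and>
     (\<forall>p\<in>{1..n}. \<forall>q\<in>{1..n}. p \<noteq> q \<and> (X p - {e}) \<inter> (X q - {e}) \<noteq> {} \<longrightarrow> f p \<noteq> f q)"
proof -
  obtain i l where il: "i \<in> {1..n}" "l \<in> {1..n}" "i \<noteq> l" "e \<in> X i" "e \<in> X l"
    using two_edges[OF e] by blast
  have adj: "line_graph_adj X i l" unfolding line_graph_adj_def using il by auto
  let ?G = "delete_edge (line_graph_adj X) i l"
  have ch: "chromatic_number {1..n} ?G = k" using crit il adj unfolding critical_def by auto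
  have "colourable {1..n} ?G (Suc n)"
    by (rule colourable_id) (auto simp: delete_edge_def line_graph_adj_def)
  from colourable_chromatic[OF this] ch have "colourable {1..n} ?G k" by simp
  then obtain f where f: "\<forall>v\<in>{1..n}. f v < k" "\<forall>u\<in>{1..n}. \<forall>v\<in>{1..n}. ?G u v \<longrightarrow> f u \<noteq> f v"
    unfolding colourable_def by blast
  have "f p \<noteq> f q" if pq: "p \<in> {1..n}" "q \<in> {1..n}" "p \<noteq> q" "(X p - {e}) \<inter> (X q - {e}) \<noteq> {}" for p q
  proof -
    obtain x where x: "x \<in> X p" "x \<in> X q" "x \<noteq> e" using pq(4) by blast
    have "{p, q} \<noteq> {i, l}"
    proof
      assume "{p, q} = {i, l}"
      then have "X p \<inter> X q = X i \<inter> X l" by (auto simp: doubleton_eq_iff)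
      with inter_single[OF il] x show False by auto
    qed
    then have "?G p q" unfolding delete_edge_def line_graph_adj_def using pq by auto
    then show ?thesis using f pq by blast
  qed
  then show ?thesis using f by blast
qed

lemma in_D_colour:
  assumes e: "e \<in> E"
    and f: "\<forall>p\<in>{1..n}. f p < k"
           "\<forall>p\<in>{1..n}. \<forall>q\<in>{1..n}. p \<noteq> q \<and> (X p - {e}) \<inter> (X q - {e}) \<noteq> {} \<longrightarrow> f p \<noteq> f q"
    and s: "\<forall>p\<in>{1..n}. 0 \<le> s p"
  shows "in_D k (E - {e}) (sumtrunc {1..n} (\<lambda>p. X p - {e}) s)"
  unfolding in_D_def
proof (intro exI[of _ "\<lambda>c. sumtrunc {p. p \<in> {1..n} \<and> f p = c} (\<lambda>p. X p - {e}) s"] conjI allI impI)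
  fix c assume "c < k"
  show "matroid_rank (E - {e}) (sumtrunc {p. p \<in> {1..n} \<and> f p = c} (\<lambda>p. X p - {e}) s)"
  proof (rule sumtrunc_matroid)
    show "finite (E - {e})" using finE by simp
    show "finite {p. p \<in> {1..n} \<and> f p = c}" by simp
    show "\<forall>p\<in>{p. p \<in> {1..n} \<and> f p = c}. finite (X p - {e}) \<and> 0 \<le> s p" using finX s by simp
    show "\<forall>p\<in>{p. p \<in> {1..n} \<and> f p = c}. \<forall>q\<in>{p. p \<in> {1..n} \<and> f p = c}.
       p \<noteq> q \<longrightarrow> (X p - {e}) \<inter> (X q - {e}) = {}" using f(2) by blast
  qed
next
  fix A assume "A \<subseteq> E - {e}"
  have "(\<Sum>c<k. sumtrunc {p. p \<in> {1..n} \<and> f p = c} (\<lambda>p. X p - {e}) s A)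
      = (\<Sum>c<k. \<Sum>p\<in>{p. p \<in> {1..n} \<and> f p = c}. min (int (card (A \<inter> (X p - {e})))) (s p))"
    unfolding sumtrunc_def by simp
  also have "\<dots> = (\<Sum>p\<in>{1..n}. min (int (card (A \<inter> (X p - {e})))) (s p))"
    by (rule sum.group) (use f(1) in auto)
  finally show "sumtrunc {1..n} (\<lambda>p. X p - {e}) s A
      = (\<Sum>c<k. sumtrunc {p. p \<in> {1..n} \<and> f p = c} (\<lambda>p. X p - {e}) s A)"
    unfolding sumtrunc_def by simp
qed

lemma del_in_D:
  assumes crit: "critical (k + 1) {1..n} (line_graph_adj X)" and e: "e \<in> E"
  shows "in_D k (E - {e}) (truncated_rho n X t)"
proof -
  obtain f where f: "\<forall>p\<in>{1..n}. f p < k"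
    "\<forall>p\<in>{1..n}. \<forall>q\<in>{1..n}. p \<noteq> q \<and> (X p - {e}) \<inter> (X q - {e}) \<noteq> {} \<longrightarrow> f p \<noteq> f q"
    using colour_minus[OF crit e] by blast
  have "in_D k (E - {e}) (sumtrunc {1..n} (\<lambda>p. X p - {e}) t)"
    using tge1 by (intro in_D_colour[OF e f]) auto
  then show ?thesis
  proof (rule in_D_cong, intro allI impI)
    fix A assume "A \<subseteq> E - {e}"
    then have "\<And>p. A \<inter> (X p - {e}) = A \<inter> X p" by auto
    then show "truncated_rho n X t A = sumtrunc {1..n} (\<lambda>p. X p - {e}) t A"
      unfolding rho_eq sumtrunc_def by simp
  qed
qed

lemma con_in_D:
  assumes crit: "critical (k + 1) {1..n} (line_graph_adj X)" and e: "e \<in> E"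
  shows "in_D k (E - {e}) (minor_fun (truncated_rho n X t) {e})"
proof -
  obtain f where f: "\<forall>p\<in>{1..n}. f p < k"
    "\<forall>p\<in>{1..n}. \<forall>q\<in>{1..n}. p \<noteq> q \<and> (X p - {e}) \<inter> (X q - {e}) \<noteq> {} \<longrightarrow> f p \<noteq> f q"
    using colour_minus[OF crit e] by blast
  define s where "s p = t p - (if e \<in> X p then 1 else 0)" for p
  have "in_D k (E - {e}) (sumtrunc {1..n} (\<lambda>p. X p - {e}) s)"
    using tge1 by (intro in_D_colour[OF e f]) (auto simp: s_def)
  then show ?thesis
  proof (rule in_D_cong, intro allI impI)
    fix A assume A: "A \<subseteq> E - {e}"
    have tm: "min (int (card ((A \<union> {e}) \<inter> X p))) (t p) - min (int (card ({e} \<inter> X p))) (t p)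
        = min (int (card (A \<inter> (X p - {e})))) (s p)" if p: "p \<in> {1..n}" for p
    proof (cases "e \<in> X p")
      case True
      have "(A \<union> {e}) \<inter> X p = insert e (A \<inter> (X p - {e}))" using True by auto
      moreover have "finite (A \<inter> (X p - {e}))" using finX[OF p] by auto
      ultimately have "card ((A \<union> {e}) \<inter> X p) = Suc (card (A \<inter> (X p - {e})))" by simp
      moreover have "{e} \<inter> X p = {e}" using True by auto
      ultimately show ?thesis using True tge1 p by (simp add: s_def)
    next
      case False
      have "(A \<union> {e}) \<inter> X p = A \<inter> (X p - {e})" "{e} \<inter> X p = {}" using False by auto
      moreover have "1 \<le> t p" using tge1 p by blast
      ultimately show ?thesis using False by (simp add: s_def)
    qed
    have "minor_fun (truncated_rho n X t) {e} A
       = (\<Sum>p\<in>{1..n}. min (int (card ((A \<union> {e}) \<inter> X p))) (t p) - min (int (card ({e} \<inter> X p))) (t p))"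
      unfolding minor_fun_def truncated_rho_def by (simp add: sum_subtractf)
    also have "\<dots> = sumtrunc {1..n} (\<lambda>p. X p - {e}) s A"
      unfolding sumtrunc_def using tm by (intro sum.cong) auto
    finally show "minor_fun (truncated_rho n X t) {e} A = sumtrunc {1..n} (\<lambda>p. X p - {e}) s A" .
  qed
qed

lemma minors_in_D:
  assumes crit: "critical (k + 1) {1..n} (line_graph_adj X)"
    and AB: "A \<subseteq> E" "B \<subseteq> E" "A \<inter> B = {}" "A \<union> B \<noteq> {}"
  shows "in_D k (E - A - B) (minor_fun (truncated_rho n X t) B)"
proof -
  obtain e where e: "e \<in> A \<union> B" using AB(4) by blast
  then have eE: "e \<in> E" using AB by auto
  show ?thesis
  proof (cases "e \<in> A")
    case True
    have "in_D k (E - {e} - (A - {e}) - B) (minor_fun (truncated_rho n X t) B)"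
      by (rule in_D_minor[OF del_in_D[OF crit eE]]) (use AB True in auto)
    moreover have "E - {e} - (A - {e}) - B = E - A - B" using True by auto
    ultimately show ?thesis by simp
  next
    case False
    then have eB: "e \<in> B" using e by auto
    have "in_D k (E - {e} - A - (B - {e})) (minor_fun (minor_fun (truncated_rho n X t) {e}) (B - {e}))"
      by (rule in_D_minor[OF con_in_D[OF crit eE]]) (use AB eB in auto)
    moreover have "E - {e} - A - (B - {e}) = E - A - B" using eB by auto
    moreover have "minor_fun (minor_fun (truncated_rho n X t) {e}) (B - {e}) = minor_fun (truncated_rho n X t) B"
    proof -
      have "\<And>Z. Z \<union> (B - {e}) \<union> {e} = Z \<union> B" "B - {e} \<union> {e} = B" using eB by auto
      then show ?thesis unfolding minor_fun_def by (simp add: fun_eq_iff)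
    qed
    ultimately show ?thesis by simp
  qed
qed

end

lemma mr_poly: "matroid_rank E r \<Longrightarrow> polymatroid E r" unfolding matroid_rank_def by blast

lemma mr_mono: "matroid_rank E r \<Longrightarrow> A \<subseteq> B \<Longrightarrow> B \<subseteq> E \<Longrightarrow> r A \<le> r B"
  unfolding matroid_rank_def polymatroid_def by blast

lemma mr_sub: "matroid_rank E r \<Longrightarrow> A \<subseteq> E \<Longrightarrow> B \<subseteq> E \<Longrightarrow> r (A \<union> B) + r (A \<inter> B) \<le> r A + r B"
  unfolding matroid_rank_def polymatroid_def by blast

lemma mr_empty: "matroid_rank E r \<Longrightarrow> r {} = 0"
  unfolding matroid_rank_def polymatroid_def by blast

lemma mr_card: "matroid_rank E r \<Longrightarrow> A \<subseteq> E \<Longrightarrow> r A \<le> int (card A)"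
  unfolding matroid_rank_def by blast

lemma mr_nonneg: "matroid_rank E r \<Longrightarrow> A \<subseteq> E \<Longrightarrow> 0 \<le> r A"
  using mr_mono[of E r "{}" A] mr_empty[of E r] by auto

lemma mr_add1:
  assumes "matroid_rank E r" "B \<subseteq> E" "x \<in> E"
  shows "r (B \<union> {x}) \<le> r B + 1"
proof -
  have "r (B \<union> {x}) + r (B \<inter> {x}) \<le> r B + r {x}" using mr_sub assms by blast
  moreover have "r {x} \<le> 1" using mr_card[of E r "{x}"] assms by auto
  moreover have "0 \<le> r (B \<inter> {x})" using mr_nonneg[of E r "B \<inter> {x}"] assms by auto
  ultimately show ?thesis by linarith
qed

lemma mr_loops:
  assumes mr: "matroid_rank E r" and BC: "B \<subseteq> C" and CS: "C \<union> S \<subseteq> E" and fin: "finite S"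
    and L: "\<forall>x\<in>S. r (B \<union> {x}) = r B"
  shows "r (C \<union> S) = r C"
  using fin CS L
proof (induction S rule: finite_induct)
  case empty
  then show ?case by simp
next
  case (insert x F)
  have IH: "r (C \<union> F) = r C" using insert by auto
  have xE: "x \<in> E" and CF: "C \<union> F \<subseteq> E" and BE: "B \<subseteq> E" using insert BC by auto
  have s1: "r ((C \<union> F) \<union> (B \<union> {x})) + r ((C \<union> F) \<inter> (B \<union> {x})) \<le> r (C \<union> F) + r (B \<union> {x})"
    using mr_sub[OF mr CF, of "B \<union> {x}"] BE xE by auto
  have eq: "(C \<union> F) \<union> (B \<union> {x}) = C \<union> insert x F" using BC by auto
  from s1 have s2: "r (C \<union> insert x F) + r ((C \<union> F) \<inter> (B \<union> {x})) \<le> r (C \<union> F) + r (B \<union> {x})"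
    unfolding eq .
  moreover have "r B \<le> r ((C \<union> F) \<inter> (B \<union> {x}))"
  proof (rule mr_mono[OF mr])
    show "B \<subseteq> (C \<union> F) \<inter> (B \<union> {x})" using BC by auto
    show "(C \<union> F) \<inter> (B \<union> {x}) \<subseteq> E" using CF by auto
  qed
  moreover have "r (B \<union> {x}) = r B" using insert by auto
  moreover have "r (C \<union> F) \<le> r (C \<union> insert x F)" by (rule mr_mono[OF mr]) (use insert in auto)
  ultimately show ?case using IH by linarith
qed

locale hsetup2 = hsetup +
  assumes tlt: "\<forall>i\<in>{1..n}. t i < int (card (X i))"
begin

lemma t_nonneg: "i \<in> {1..n} \<Longrightarrow> 0 \<le> t i" using tge1 by force

lemma rho_diff:
  "truncated_rho n X t Y - truncated_rho n X t Z
   = (\<Sum>p\<in>{1..n}. min (int (card (Y \<inter> X p))) (t p) - min (int (card (Z \<inter> X p))) (t p))"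
  unfolding truncated_rho_def by (simp add: sum_subtractf)

lemma big_part:
  assumes i: "i \<in> {1..n}" and p: "p \<in> {1..n}" "p \<noteq> i"
  shows "t p \<le> int (card (X p - X i))"
proof -
  have sub: "X p \<subseteq> (X p - X i) \<union> (X p \<inter> X i)" by auto
  have fin: "finite ((X p - X i) \<union> (X p \<inter> X i))" using finX[OF p(1)] by auto
  have "card (X p) \<le> card ((X p - X i) \<union> (X p \<inter> X i))" using card_mono[OF fin sub] .
  also have "\<dots> \<le> card (X p - X i) + card (X p \<inter> X i)" by (rule card_Un_le)
  finally have "card (X p) \<le> card (X p - X i) + card (X p \<inter> X i)" .
  moreover have "card (X p \<inter> X i) \<le> 1" using H2 i p by auto
  moreover have "t p < int (card (X p))" using tlt p by auto
  ultimately show ?thesis by linarith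
qed

lemma Delta:
  assumes i: "i \<in> {1..n}" and S: "S \<subseteq> X i"
  shows "truncated_rho n X t ((E - X i) \<union> S) - truncated_rho n X t (E - X i) = min (int (card S)) (t i)"
proof -
  have tm: "min (int (card (((E - X i) \<union> S) \<inter> X p))) (t p) - min (int (card ((E - X i) \<inter> X p))) (t p)
      = (if p = i then min (int (card S)) (t i) else 0)" if p: "p \<in> {1..n}" for p
  proof (cases "p = i")
    case True
    have "((E - X i) \<union> S) \<inter> X p = S" "(E - X i) \<inter> X p = {}" using True S by auto
    then show ?thesis using True t_nonneg[OF i] by simp
  next
    case False
    have e1: "(E - X i) \<inter> X p = X p - X i" using Xsub[OF p] by auto
    have "t p \<le> int (card (X p - X i))" using big_part[OF i p False] .
    moreover have "card (X p - X i) \<le> card (((E - X i) \<union> S) \<inter> X p)"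
      by (rule card_mono) (use finX[OF p] e1 in auto)
    ultimately show ?thesis using False e1 by simp
  qed
  show ?thesis unfolding rho_diff using tm i by (simp add: sum.delta)
qed

lemma Conflict:
  assumes i: "i \<in> {1..n}" and l: "l \<in> {1..n}" and il: "i \<noteq> l" and e: "e \<in> X i" "e \<in> X l"
  shows "truncated_rho n X t ((E - (X i \<union> X l)) \<union> {e}) - truncated_rho n X t (E - (X i \<union> X l)) = 2"
proof -
  let ?D = "X i \<union> X l"
  have tm: "min (int (card (((E - ?D) \<union> {e}) \<inter> X p))) (t p) - min (int (card ((E - ?D) \<inter> X p))) (t p)
      = (if p = i then 1 else 0) + (if p = l then 1 else 0)" if p: "p \<in> {1..n}" for p
  proof (cases "p = i \<or> p = l")
    case True
    have "((E - ?D) \<union> {e}) \<inter> X p = {e}" "(E - ?D) \<inter> X p = {}" using True e Xsub i l by auto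
    moreover have "1 \<le> t p" using tge1 p by auto
    ultimately show ?thesis using True il by auto
  next
    case False
    show ?thesis
    proof (cases "e \<in> X p")
      case True
      have "X p \<inter> X i = {e}" using inter_single[OF p i] False True e by auto
      moreover have "X p \<inter> X l = {e}" using inter_single[OF p l] False True e by auto
      ultimately have e1: "(E - ?D) \<inter> X p = X p - {e}" using Xsub[OF p] True by auto
      have e2: "((E - ?D) \<union> {e}) \<inter> X p = X p" using e1 True by auto
      have "card (X p - {e}) = card (X p) - 1" using True finX[OF p] by simp
      moreover have "t p < int (card (X p))" using tlt p by auto
      moreover have "card (X p) \<ge> 1" using True finX[OF p] card_0_eq by fastforce
      ultimately have "t p \<le> int (card (X p - {e}))" by linarith
      moreover have "card (X p - {e}) \<le> card (X p)" using finX[OF p] by (simp add: card_mono)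
      ultimately show ?thesis using False e1 e2 by simp
    next
      case True2: False
      have "((E - ?D) \<union> {e}) \<inter> X p = (E - ?D) \<inter> X p" using True2 by auto
      then show ?thesis using False by simp
    qed
  qed
  have "(\<Sum>p\<in>{1..n}. (if p = i then 1 else 0) + (if p = l then 1 else (0::int))) = 2"
    using i l il by (simp add: sum.distrib sum.delta)
  moreover have "(\<Sum>p\<in>{1..n}. min (int (card (((E - ?D) \<union> {e}) \<inter> X p))) (t p) - min (int (card ((E - ?D) \<inter> X p))) (t p))
     = (\<Sum>p\<in>{1..n}. (if p = i then 1 else 0) + (if p = l then 1 else (0::int)))"
    by (rule sum.cong) (use tm in auto)
  ultimately show ?thesis unfolding rho_diff by simp
qed

end

context hsetup2
begin

lemma unique_colour:
  fixes k :: nat and r :: "nat \<Rightarrow> 'a set \<Rightarrow> int"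
  assumes r: "\<forall>j<k. matroid_rank E (r j)"
    and dec: "\<forall>Z. Z \<subseteq> E \<longrightarrow> truncated_rho n X t Z = (\<Sum>j<k. r j Z)"
    and i: "i \<in> {1..n}"
  shows "\<exists>!j. j < k \<and> r j E \<noteq> r j (E - X i)"
proof -
  let ?B = "E - X i"
  define D where "D j S = r j (?B \<union> S) - r j ?B" for j S
  have BX: "?B \<union> X i = E" using Xsub[OF i] by auto
  have sumD: "(\<Sum>j<k. D j S) = min (int (card S)) (t i)" if S: "S \<subseteq> X i" for S
  proof -
    have "?B \<union> S \<subseteq> E" using Xsub[OF i] S by auto
    then have "(\<Sum>j<k. D j S) = truncated_rho n X t (?B \<union> S) - truncated_rho n X t ?B"
      unfolding D_def using dec by (simp add: sum_subtractf)
    also have "\<dots> = min (int (card S)) (t i)" using Delta[OF i S] .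
    finally show ?thesis .
  qed
  have Dmono: "D j S \<le> D j S'" if "j < k" "S \<subseteq> S'" "S' \<subseteq> X i" for j S S'
    unfolding D_def using mr_mono[OF r[rule_format, OF that(1)], of "?B \<union> S" "?B \<union> S'"] that Xsub[OF i] by auto
  have Dnn: "0 \<le> D j S" if "j < k" "S \<subseteq> X i" for j S
    using Dmono[OF that(1) empty_subsetI that(2)] unfolding D_def by simp
  have D1: "D j {x} \<le> 1" if "j < k" "x \<in> X i" for j x
    unfolding D_def using mr_add1[OF r[rule_format, OF that(1)], of ?B x] that Xsub[OF i] by auto
  have DE: "D j (X i) = r j E - r j ?B" for j unfolding D_def BX ..
  have loops: "r j (C \<union> S) = r j C" if "j < k" "?B \<subseteq> C" "C \<union> S \<subseteq> E" "S \<subseteq> X i" "\<forall>x\<in>S. D j {x} = 0" for j C S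
    by (rule mr_loops[OF r[rule_format, OF that(1)] that(2) that(3)])
       (use that finX[OF i] finite_subset in \<open>auto simp: D_def\<close>)
  have tpos: "1 \<le> t i" using tge1 i by auto
  have tl: "t i < int (card (X i))" using tlt i by auto
  have ex: "\<exists>j<k. D j (X i) \<noteq> 0"
  proof (rule ccontr)
    assume "\<not> ?thesis"
    then have "(\<Sum>j<k. D j (X i)) = 0" by simp
    with sumD[of "X i"] tpos tl show False by simp
  qed
  have uniq: False if j1: "j1 < k" "D j1 (X i) \<noteq> 0" and j2: "j2 < k" "D j2 (X i) \<noteq> 0" "j2 \<noteq> j1" for j1 j2
  proof -
    define P where "P = {x \<in> X i. D j1 {x} \<noteq> 0}"
    define Q where "Q = X i - P"
    have PX: "P \<subseteq> X i" and QX: "Q \<subseteq> X i" and PQ: "P \<union> Q = X i" "P \<inter> Q = {}"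
      unfolding P_def Q_def by auto
    have single: "D j {x} = 0" if "x \<in> P" "j < k" "j \<noteq> j1" for x j
    proof -
      have x: "x \<in> X i" using that P_def by auto
      have s: "(\<Sum>j<k. D j {x}) = 1" using sumD[of "{x}"] x tpos by simp
      have d1: "D j1 {x} = 1" using that(1) Dnn[OF j1(1), of "{x}"] D1[OF j1(1) x] x unfolding P_def by auto
      have "(\<Sum>j<k. D j {x}) = D j1 {x} + (\<Sum>j\<in>{..<k} - {j1}. D j {x})"
        by (rule sum.remove) (use j1 in auto)
      with s d1 have z: "(\<Sum>j\<in>{..<k} - {j1}. D j {x}) = 0" by simp
      have "\<forall>j\<in>{..<k} - {j1}. D j {x} = 0"
        using sum_nonneg_eq_0_iff[of "{..<k} - {j1}" "\<lambda>j. D j {x}"] z Dnn x by auto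
      then show ?thesis using that by auto
    qed
    have QD: "\<forall>x\<in>Q. D j1 {x} = 0" unfolding Q_def P_def by auto
    have a: "D j P = 0" if "j < k" "j \<noteq> j1" for j
      using loops[OF that(1), of ?B P] PX Xsub[OF i] single that unfolding D_def by auto
    have b: "D j1 Q = 0"
      using loops[OF j1(1), of ?B Q] QX Xsub[OF i] QD unfolding D_def by auto
    have c: "D j1 (X i) = D j1 P"
    proof -
      have "r j1 ((?B \<union> P) \<union> Q) = r j1 (?B \<union> P)"
        by (rule loops[OF j1(1)]) (use PX QX Xsub[OF i] QD in auto)
      moreover have "(?B \<union> P) \<union> Q = ?B \<union> X i" using PQ by auto
      ultimately show ?thesis unfolding D_def by simp
    qed
    have Pne: "P \<noteq> {}"
    proof
      assume "P = {}"
      then have "Q = X i" using PQ by auto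
      then show False using b j1 by simp
    qed
    have Qne: "Q \<noteq> {}"
    proof
      assume "Q = {}"
      then have "P = X i" using PQ by auto
      then show False using a[OF j2(1) j2(3)] j2 by simp
    qed
    have per: "D j P + D j Q \<le> D j (X i)" if "j < k" for j
    proof (cases "j = j1")
      case True then show ?thesis using b c by simp
    next
      case False then show ?thesis using a[OF that False] Dmono[OF that QX] by simp
    qed
    have "(\<Sum>j<k. D j P) + (\<Sum>j<k. D j Q) \<le> (\<Sum>j<k. D j (X i))"
      unfolding sum.distrib[symmetric] by (rule sum_mono) (use per in auto)
    then have ineq: "min (int (card P)) (t i) + min (int (card Q)) (t i) \<le> min (int (card (X i))) (t i)"
      using sumD[OF PX] sumD[OF QX] sumD[of "X i"] by simp
    have fP: "finite P" "finite Q" using PX QX finX[OF i] finite_subset by auto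
    have cPQ: "card P + card Q = card (X i)" using card_Un_disjoint[OF fP PQ(2)] PQ(1) by simp
    have "card P \<ge> 1" "card Q \<ge> 1" using Pne Qne fP by (auto simp: Suc_le_eq card_gt_0_iff)
    then show False using ineq cPQ tpos tl by linarith
  qed
  show ?thesis
  proof -
    obtain j where j: "j < k" "D j (X i) \<noteq> 0" using ex by blast
    show ?thesis
    proof (rule ex1I[of _ j])
      show "j < k \<and> r j E \<noteq> r j ?B" using j DE by simp
      fix j' assume "j' < k \<and> r j' E \<noteq> r j' ?B"
      then show "j' = j" using uniq[OF j, of j'] DE by auto
    qed
  qed
qed

end

locale decomp = hsetup2 E n X t
  for E :: "'a set" and n X t +
  fixes k :: nat and r :: "nat \<Rightarrow> 'a set \<Rightarrow> int"
  assumes r: "\<forall>j<k. matroid_rank E (r j)"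
    and dec: "\<forall>Z. Z \<subseteq> E \<longrightarrow> truncated_rho n X t Z = (\<Sum>j<k. r j Z)"
    and H3: "\<not> (\<exists>a\<in>E. \<exists>b\<in>E. \<exists>c\<in>E. a \<noteq> b \<and> a \<noteq> c \<and> b \<noteq> c
                 \<and> (\<exists>i\<in>{1..n}. X i = {a, b}) \<and> (\<exists>i\<in>{1..n}. X i = {a, c})
                 \<and> (\<exists>i\<in>{1..n}. X i = {b, c}))"
begin

definition col :: "nat \<Rightarrow> nat" where
  "col i = (THE j. j < k \<and> r j E \<noteq> r j (E - X i))"

definition kap :: "nat \<Rightarrow> 'a set \<Rightarrow> int" where
  "kap g A = r g E - r g (E - A)"

definition s :: "nat \<Rightarrow> int" where
  "s m = int (card (X m)) - t m"

definition Ls :: "'a set \<Rightarrow> int" where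
  "Ls A = (\<Sum>m\<in>{1..n}. max 0 (int (card (A \<inter> X m)) - s m))"

lemma colp: "i \<in> {1..n} \<Longrightarrow> col i < k \<and> r (col i) E \<noteq> r (col i) (E - X i)"
  unfolding col_def by (rule theI') (rule unique_colour[OF r dec])

lemma other: "i \<in> {1..n} \<Longrightarrow> g < k \<Longrightarrow> g \<noteq> col i \<Longrightarrow> r g E = r g (E - X i)"
  using unique_colour[OF r dec, of i] colp[of i] by blast

lemma s_pos: "m \<in> {1..n} \<Longrightarrow> 1 \<le> s m"
  using tlt unfolding s_def by force

lemma mrg: "g < k \<Longrightarrow> matroid_rank E (r g)" using r by blast

lemma K0: "kap g {} = 0" unfolding kap_def by simp

lemma Kmono: "g < k \<Longrightarrow> A \<subseteq> B \<Longrightarrow> B \<subseteq> E \<Longrightarrow> kap g A \<le> kap g B"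
  unfolding kap_def using mr_mono[OF mrg, of g "E - B" "E - A"] by auto

lemma Knn: "g < k \<Longrightarrow> A \<subseteq> E \<Longrightarrow> 0 \<le> kap g A"
  using Kmono[of g "{}" A] K0 by simp

lemma Ksup:
  assumes g: "g < k" and A: "A \<subseteq> E" and B: "B \<subseteq> E"
  shows "kap g A + kap g B \<le> kap g (A \<union> B) + kap g (A \<inter> B)"
proof -
  have "r g ((E - A) \<union> (E - B)) + r g ((E - A) \<inter> (E - B)) \<le> r g (E - A) + r g (E - B)"
    by (rule mr_sub[OF mrg[OF g]]) auto
  moreover have "(E - A) \<union> (E - B) = E - (A \<inter> B)" "(E - A) \<inter> (E - B) = E - (A \<union> B)" by auto
  ultimately show ?thesis unfolding kap_def by simp
qed

lemma Kunit:
  assumes g: "g < k" and A: "A \<subseteq> E" and x: "x \<in> E"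
  shows "kap g (insert x A) \<le> kap g A + 1"
proof -
  have "r g ((E - insert x A) \<union> {x}) \<le> r g (E - insert x A) + 1"
    by (rule mr_add1[OF mrg[OF g]]) (use x in auto)
  moreover have "r g (E - A) \<le> r g ((E - insert x A) \<union> {x})"
    by (rule mr_mono[OF mrg[OF g]]) (use x in auto)
  ultimately show ?thesis unfolding kap_def by simp
qed

lemma Ksum:
  assumes A: "A \<subseteq> E"
  shows "(\<Sum>g<k. kap g A) = Ls A"
proof -
  have "(\<Sum>g<k. kap g A) = (\<Sum>g<k. r g E) - (\<Sum>g<k. r g (E - A))"
    unfolding kap_def by (simp add: sum_subtractf)
  also have "\<dots> = truncated_rho n X t E - truncated_rho n X t (E - A)"
    using dec by simp
  also have "\<dots> = Ls A"
    unfolding rho_diff Ls_def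
  proof (rule sum.cong)
    fix m assume m: "m \<in> {1..n}"
    have fX: "finite (X m)" using finX[OF m] .
    have e1: "E \<inter> X m = X m" using Xsub[OF m] by auto
    have e2: "(E - A) \<inter> X m = X m - (A \<inter> X m)" using Xsub[OF m] by auto
    have c2: "card (X m - (A \<inter> X m)) = card (X m) - card (A \<inter> X m)"
      by (rule card_Diff_subset) (use fX in auto)
    have le: "card (A \<inter> X m) \<le> card (X m)" by (rule card_mono) (use fX in auto)
    have tl: "t m < int (card (X m))" using tlt m by auto
    show "min (int (card (E \<inter> X m))) (t m) - min (int (card ((E - A) \<inter> X m))) (t m)
        = max 0 (int (card (A \<inter> X m)) - s m)"
      unfolding e1 e2 c2 s_def using le tl by (simp add: of_nat_diff)
  qed simp
  finally show ?thesis .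
qed

lemma term_nn: "0 \<le> max 0 (x::int)" by simp

lemma Ls_sub:
  assumes m: "m \<in> {1..n}" and S: "S \<subseteq> X m"
  shows "Ls S = max 0 (int (card S) - s m)"
proof -
  have "Ls S = (\<Sum>m'\<in>{1..n}. if m' = m then max 0 (int (card S) - s m) else 0)"
    unfolding Ls_def
  proof (rule sum.cong)
    fix m' assume m': "m' \<in> {1..n}"
    show "max 0 (int (card (S \<inter> X m')) - s m') = (if m' = m then max 0 (int (card S) - s m) else 0)"
    proof (cases "m' = m")
      case True then show ?thesis using S by (simp add: Int_absorb2)
    next
      case False
      have "card (S \<inter> X m') \<le> card (X m \<inter> X m')" by (rule card_mono) (use finX[OF m] S in auto)
      also have "\<dots> \<le> 1" using H2 m m' False by auto
      finally show ?thesis using s_pos[OF m'] False by simp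
    qed
  qed simp
  also have "\<dots> = max 0 (int (card S) - s m)" using m by simp
  finally show ?thesis .
qed

lemma Kcol_other:
  assumes m: "m \<in> {1..n}" and g: "g < k" "g \<noteq> col m" and S: "S \<subseteq> X m"
  shows "kap g S = 0"
proof -
  have "kap g (X m) = 0" unfolding kap_def using other[OF m g] by simp
  moreover have "kap g S \<le> kap g (X m)" by (rule Kmono[OF g(1) S Xsub[OF m]])
  moreover have "0 \<le> kap g S" by (rule Knn[OF g(1)]) (use S Xsub[OF m] in auto)
  ultimately show ?thesis by simp
qed

lemma Kcol:
  assumes m: "m \<in> {1..n}" and S: "S \<subseteq> X m"
  shows "kap (col m) S = max 0 (int (card S) - s m)"
proof -
  have SE: "S \<subseteq> E" using S Xsub[OF m] by auto
  have ck: "col m < k" using colp[OF m] by blast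
  have "(\<Sum>g<k. kap g S) = kap (col m) S + (\<Sum>g\<in>{..<k} - {col m}. kap g S)"
    by (rule sum.remove) (use ck in auto)
  moreover have "(\<Sum>g\<in>{..<k} - {col m}. kap g S) = 0"
    by (rule sum.neutral) (use Kcol_other[OF m _ _ S] in auto)
  ultimately show ?thesis using Ksum[OF SE] Ls_sub[OF m S] by simp
qed

lemma Ksingle:
  assumes x: "x \<in> E" and g: "g < k"
  shows "kap g {x} = 0"
proof -
  have "Ls {x} = 0" unfolding Ls_def
  proof (rule sum.neutral, intro ballI)
    fix m assume m: "m \<in> {1..n}"
    have "card ({x} \<inter> X m) \<le> 1" by (rule order_trans[OF card_mono[of "{x}"]]) auto
    then show "max 0 (int (card ({x} \<inter> X m)) - s m) = 0" using s_pos[OF m] by simp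
  qed
  then have s0: "(\<Sum>g<k. kap g {x}) = 0" using Ksum[of "{x}"] x by simp
  have "\<forall>g\<in>{..<k}. kap g {x} = 0"
    using sum_nonneg_eq_0_iff[of "{..<k}" "\<lambda>g. kap g {x}"] s0 Knn x by auto
  then show ?thesis using g by simp
qed

end

context decomp
begin

lemma pair_in:
  assumes "m \<in> {1..n}" "m' \<in> {1..n}" "m \<noteq> m'" "u \<noteq> v" "u \<in> X m" "v \<in> X m" "u \<in> X m'" "v \<in> X m'"
  shows False
proof -
  have "{u, v} \<subseteq> X m \<inter> X m'" using assms by auto
  then have "card {u, v} \<le> card (X m \<inter> X m')" by (rule card_mono[rotated]) (use finX assms(1) in auto)
  moreover have "card (X m \<inter> X m') \<le> 1" using H2 assms(1-3) by auto
  ultimately show False using assms(4) by simp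
qed

lemma two_terms:
  assumes "g1 < k" "g2 < k" "g1 \<noteq> g2" "\<forall>g<k. 0 \<le> f g"
  shows "f g1 + f g2 \<le> (\<Sum>g<k. f g :: int)"
proof -
  have "(\<Sum>g\<in>{g1, g2}. f g) \<le> (\<Sum>g<k. f g)"
    by (rule sum_mono2) (use assms in auto)
  then show ?thesis using assms(3) by simp
qed

lemma Ktrans:
  assumes g: "g < k" and E: "u \<in> E" "v \<in> E" "w \<in> E" and d: "u \<noteq> v" "v \<noteq> w" "u \<noteq> w"
    and h1: "1 \<le> kap g {u, v}" and h2: "1 \<le> kap g {v, w}"
  shows "1 \<le> kap g {u, w}"
proof -
  have "kap g {u, v} + kap g {v, w} \<le> kap g ({u, v} \<union> {v, w}) + kap g ({u, v} \<inter> {v, w})"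
    by (rule Ksup[OF g]) (use E in auto)
  moreover have "{u, v} \<inter> {v, w} = {v}" using d by auto
  moreover have "{u, v} \<union> {v, w} = insert v {u, w}" by auto
  moreover have "kap g (insert v {u, w}) \<le> kap g {u, w} + 1" by (rule Kunit[OF g]) (use E in auto)
  moreover have "kap g {v} = 0" using Ksingle E g by blast
  ultimately show ?thesis using h1 h2 by simp
qed

lemma term_pair_le:
  assumes m: "m \<in> {1..n}" and ne: "\<not> (u \<in> X m \<and> v \<in> X m)"
  shows "max 0 (int (card ({u, v} \<inter> X m)) - s m) = 0"
proof -
  have "card ({u, v} \<inter> X m) \<le> 1"
  proof -
    have "{u, v} \<inter> X m \<subseteq> {u} \<or> {u, v} \<inter> X m \<subseteq> {v}" using ne by auto
    then show ?thesis by (metis card.empty card.insert card_mono empty_iff finite.intros(1) finite_insert le_zero_eq subset_singletonD order_refl One_nat_def)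
  qed
  then show ?thesis using s_pos[OF m] by simp
qed

lemma factP:
  assumes g: "g < k" and E: "u \<in> E" "v \<in> E" and d: "u \<noteq> v" and h: "1 \<le> kap g {u, v}"
  shows "\<exists>B\<in>{1..n}. u \<in> X B \<and> v \<in> X B \<and> s B = 1 \<and> col B = g"
proof -
  have uvE: "{u, v} \<subseteq> E" using E by auto
  have sumeq: "(\<Sum>g<k. kap g {u, v}) = Ls {u, v}" by (rule Ksum[OF uvE])
  have nn: "\<forall>g<k. 0 \<le> kap g {u, v}" using Knn uvE by blast
  have "kap g {u, v} \<le> (\<Sum>g<k. kap g {u, v})"
    by (rule member_le_sum) (use g nn in auto)
  then have Lpos: "1 \<le> Ls {u, v}" using h sumeq by simp
  obtain B where B: "B \<in> {1..n}" "u \<in> X B" "v \<in> X B"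
  proof (rule ccontr)
    assume "\<not> thesis"
    then have "\<forall>m\<in>{1..n}. \<not> (u \<in> X m \<and> v \<in> X m)" using that by blast
    then have "Ls {u, v} = 0" unfolding Ls_def by (intro sum.neutral) (use term_pair_le in blast)
    with Lpos show False by simp
  qed
  have cB: "card ({u, v} \<inter> X B) = 2" using B d by (simp add: insert_absorb)
  have LsB: "Ls {u, v} = max 0 (2 - s B)"
  proof -
    have "Ls {u, v} = (\<Sum>m\<in>{1..n}. if m = B then max 0 (2 - s B) else 0)"
      unfolding Ls_def
    proof (rule sum.cong)
      fix m assume m: "m \<in> {1..n}"
      show "max 0 (int (card ({u, v} \<inter> X m)) - s m) = (if m = B then max 0 (2 - s B) else 0)"
      proof (cases "m = B")
        case True then show ?thesis using cB by simp
      next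
        case False
        have "\<not> (u \<in> X m \<and> v \<in> X m)" using pair_in[OF m B(1) False d] B by blast
        then show ?thesis using term_pair_le[OF m] False by simp
      qed
    qed simp
    also have "\<dots> = max 0 (2 - s B)" using B(1) by simp
    finally show ?thesis .
  qed
  have sB: "s B = 1" using LsB Lpos s_pos[OF B(1)] by simp
  have "col B = g"
  proof (rule ccontr)
    assume ne: "col B \<noteq> g"
    have ck: "col B < k" using colp[OF B(1)] by blast
    have "kap (col B) {u, v} = max 0 (int (card {u, v}) - s B)"
      by (rule Kcol[OF B(1)]) (use B in auto)
    then have "kap (col B) {u, v} = 1" using sB d by simp
    moreover have "kap g {u, v} + kap (col B) {u, v} \<le> (\<Sum>g<k. kap g {u, v})"
      by (rule two_terms) (use g ck ne nn in auto)
    ultimately show False using h sumeq LsB sB by simp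
  qed
  then show ?thesis using B sB by blast
qed

lemma trip:
  assumes L: "L \<in> {1..n}" "s L = 1" and u: "u \<in> E" "u \<notin> X L"
    and ab: "a \<in> X L" "b \<in> X L" "a \<noteq> b"
    and Ba: "Ba \<in> {1..n}" "u \<in> X Ba" "a \<in> X Ba" "s Ba = 1"
    and Bb: "Bb \<in> {1..n}" "u \<in> X Bb" "b \<in> X Bb" "s Bb = 1" and dB: "Ba \<noteq> Bb"
  shows "\<exists>g<k. g \<noteq> col L \<and> 1 \<le> kap g {u, a, b}"
proof -
  let ?j = "col L"
  let ?T = "{u, a, b}"
  have jk: "?j < k" using colp[OF L(1)] by blast
  have aE: "a \<in> E" "b \<in> E" using ab Xsub[OF L(1)] by auto
  have TE: "?T \<subseteq> E" using u aE by auto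
  have BaL: "Ba \<noteq> L" using Ba u by auto
  have BbL: "Bb \<noteq> L" using Bb u by auto
  define tm where "tm m = max 0 (int (card (?T \<inter> X m)) - s m)" for m
  have tmnn: "0 \<le> tm m" for m unfolding tm_def by simp
  have c2: "2 \<le> card (?T \<inter> X m)" if "m \<in> {1..n}" "x \<in> X m" "y \<in> X m" "x \<in> ?T" "y \<in> ?T" "x \<noteq> y" for m x y
  proof -
    have "{x, y} \<subseteq> ?T \<inter> X m" using that by auto
    then have "card {x, y} \<le> card (?T \<inter> X m)" by (rule card_mono[rotated]) simp
    then show ?thesis using that(6) by simp
  qed
  have t1: "1 \<le> tm m" if "m \<in> {1..n}" "s m = 1" "x \<in> X m" "y \<in> X m" "x \<in> ?T" "y \<in> ?T" "x \<noteq> y" for m x y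
    using c2[OF that(1,3-7)] that(2) unfolding tm_def by simp
  have ua: "u \<noteq> a" "u \<noteq> b" using u ab by auto
  have "tm L + tm Ba + tm Bb = (\<Sum>m\<in>{L, Ba, Bb}. tm m)" using BaL BbL dB by simp
  also have "\<dots> \<le> (\<Sum>m\<in>{1..n}. tm m)"
    by (rule sum_mono2) (use L Ba Bb tmnn in auto)
  also have "\<dots> = Ls ?T" unfolding Ls_def tm_def ..
  finally have "tm L + tm Ba + tm Bb \<le> Ls ?T" .
  moreover have "1 \<le> tm L" by (rule t1[OF L(1) L(2) ab(1) ab(2)]) (use ab in auto)
  moreover have "1 \<le> tm Ba"
    by (rule t1[OF Ba(1) Ba(4) Ba(2) Ba(3)]) (use ua in auto)
  moreover have "1 \<le> tm Bb"
    by (rule t1[OF Bb(1) Bb(4) Bb(2) Bb(3)]) (use ua in auto)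
  ultimately have Ls3: "3 \<le> Ls ?T" by linarith
  have kj: "kap ?j ?T \<le> 2"
  proof -
    have "kap ?j (insert a {b}) \<le> kap ?j {b} + 1" by (rule Kunit[OF jk]) (use aE in auto)
    moreover have "kap ?j (insert u {a, b}) \<le> kap ?j {a, b} + 1" by (rule Kunit[OF jk]) (use aE u in auto)
    moreover have "kap ?j {b} = 0" using Ksingle aE jk by blast
    ultimately show ?thesis by simp
  qed
  have "(\<Sum>g<k. kap g ?T) = kap ?j ?T + (\<Sum>g\<in>{..<k} - {?j}. kap g ?T)"
    by (rule sum.remove) (use jk in auto)
  then have rest: "1 \<le> (\<Sum>g\<in>{..<k} - {?j}. kap g ?T)" using Ksum[OF TE] Ls3 kj by simp
  show ?thesis
  proof (rule ccontr)
    assume "\<not> ?thesis"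
    then have "\<forall>g\<in>{..<k} - {?j}. kap g ?T \<le> 0" by force
    then have "(\<Sum>g\<in>{..<k} - {?j}. kap g ?T) \<le> 0" by (intro sum_nonpos) blast
    with rest show False by simp
  qed
qed

lemma share:
  assumes g: "g < k" "g \<noteq> col L" and L: "L \<in> {1..n}" and u: "u \<in> E" "u \<notin> X L"
    and abc: "a \<in> X L" "b \<in> X L" "c \<in> X L" "a \<noteq> b" "a \<noteq> c" "b \<noteq> c"
    and Ba: "Ba \<in> {1..n}" "u \<in> X Ba" "a \<in> X Ba" "col Ba = col L"
    and h1: "1 \<le> kap g {u, a, b}" and h2: "1 \<le> kap g {u, a, c}"
  shows False
proof -
  have aE: "a \<in> E" "b \<in> E" "c \<in> E" using abc Xsub[OF L] by auto
  have "kap g {u, a, b} + kap g {u, a, c} \<le> kap g ({u, a, b} \<union> {u, a, c}) + kap g ({u, a, b} \<inter> {u, a, c})"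
    by (rule Ksup[OF g(1)]) (use aE u in auto)
  moreover have "{u, a, b} \<inter> {u, a, c} = {u, a}" using abc u by auto
  moreover have "{u, a, b} \<union> {u, a, c} = insert u {a, b, c}" by auto
  moreover have "kap g {u, a} = 0" by (rule Kcol_other[OF Ba(1) g(1)]) (use g Ba in auto)
  moreover have "kap g (insert u {a, b, c}) \<le> kap g {a, b, c} + 1" by (rule Kunit[OF g(1)]) (use aE u in auto)
  moreover have "kap g {a, b, c} = 0" by (rule Kcol_other[OF L g]) (use abc in auto)
  ultimately show False using h1 h2 by simp
qed

lemma quad:
  assumes L: "L \<in> {1..n}" "s L = 1" and u: "u \<notin> X L"
    and v: "v1 \<in> X L" "v2 \<in> X L" "v3 \<in> X L" "v1 \<noteq> v2" "v1 \<noteq> v3" "v2 \<noteq> v3"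
    and B1: "B1 \<in> {1..n}" "u \<in> X B1" "v1 \<in> X B1"
    and B2: "B2 \<in> {1..n}" "u \<in> X B2" "v2 \<in> X B2"
    and B3: "B3 \<in> {1..n}" "u \<in> X B3" "v3 \<in> X B3"
  shows "Ls {u, v1, v2, v3} \<le> 5"
proof -
  let ?A = "{u, v1, v2, v3}"
  define tm where "tm m = max 0 (int (card (?A \<inter> X m)) - s m)" for m
  have uv: "u \<noteq> v1" "u \<noteq> v2" "u \<noteq> v3" using u v by auto
  have B1L: "B1 \<noteq> L" using B1 u by auto
  have B2L: "B2 \<noteq> L" using B2 u by auto
  have B3L: "B3 \<noteq> L" using B3 u by auto
  have nB1: "v2 \<notin> X B1" "v3 \<notin> X B1"
    using pair_in[OF B1(1) L(1) B1L, of v1 v2] pair_in[OF B1(1) L(1) B1L, of v1 v3] v B1 by auto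
  have nB2: "v1 \<notin> X B2" "v3 \<notin> X B2"
    using pair_in[OF B2(1) L(1) B2L, of v2 v1] pair_in[OF B2(1) L(1) B2L, of v2 v3] v B2 by auto
  have nB3: "v1 \<notin> X B3" "v2 \<notin> X B3"
    using pair_in[OF B3(1) L(1) B3L, of v3 v1] pair_in[OF B3(1) L(1) B3L, of v3 v2] v B3 by auto
  have d12: "B1 \<noteq> B2" using nB1 B2 by auto
  have d13: "B1 \<noteq> B3" using nB1 B3 by auto
  have d23: "B2 \<noteq> B3" using nB2 B3 by auto
  have zero: "tm m = 0" if m: "m \<in> {1..n}" "m \<noteq> L" "m \<noteq> B1" "m \<noteq> B2" "m \<noteq> B3" for m
  proof -
    have nL: "\<not> (x \<in> X m \<and> y \<in> X m)" if "x \<in> X L" "y \<in> X L" "x \<noteq> y" for x y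
      using pair_in[OF m(1) L(1) m(2) that(3)] that by blast
    have n1: "\<not> (u \<in> X m \<and> v1 \<in> X m)" using pair_in[OF m(1) B1(1) m(3) uv(1)] B1 by blast
    have n2: "\<not> (u \<in> X m \<and> v2 \<in> X m)" using pair_in[OF m(1) B2(1) m(4) uv(2)] B2 by blast
    have n3: "\<not> (u \<in> X m \<and> v3 \<in> X m)" using pair_in[OF m(1) B3(1) m(5) uv(3)] B3 by blast
    have "\<forall>x\<in>?A \<inter> X m. \<forall>y\<in>?A \<inter> X m. x = y"
    proof (intro ballI)
      fix x y assume x: "x \<in> ?A \<inter> X m" and y: "y \<in> ?A \<inter> X m"
      show "x = y"
      proof (rule ccontr)
        assume xy: "x \<noteq> y"
        have xm: "x \<in> X m" "y \<in> X m" using x y by auto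
        have xs: "x = u \<or> x = v1 \<or> x = v2 \<or> x = v3" using x by blast
        have ys: "y = u \<or> y = v1 \<or> y = v2 \<or> y = v3" using y by blast
        have n12: "\<not> (v1 \<in> X m \<and> v2 \<in> X m)" by (rule nL[OF v(1) v(2) v(4)])
        have n13: "\<not> (v1 \<in> X m \<and> v3 \<in> X m)" by (rule nL[OF v(1) v(3) v(5)])
        have n23: "\<not> (v2 \<in> X m \<and> v3 \<in> X m)" by (rule nL[OF v(2) v(3) v(6)])
        from xs ys show False
          by (elim disjE) (use xm xy n1 n2 n3 n12 n13 n23 in blast)+
      qed
    qed
    moreover have fin: "finite (?A \<inter> X m)" by simp
    ultimately have "card (?A \<inter> X m) \<le> Suc 0" using card_le_Suc0_iff_eq[OF fin] by blast
    then show ?thesis unfolding tm_def using s_pos[OF m(1)] by simp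
  qed
  have "Ls ?A = (\<Sum>m\<in>{1..n}. tm m)" unfolding Ls_def tm_def ..
  also have "\<dots> = (\<Sum>m\<in>{L, B1, B2, B3}. tm m)"
    by (rule sum.mono_neutral_right) (use L B1 B2 B3 zero in auto)
  also have "\<dots> = tm L + tm B1 + tm B2 + tm B3" using B1L B2L B3L d12 d13 d23 by simp
  also have "\<dots> \<le> 5"
  proof -
    have "?A \<inter> X L = {v1, v2, v3}" using u v by auto
    then have tL: "tm L = 2" unfolding tm_def using v L(2) by simp
    have tmB: "tm B \<le> 1" if "B \<in> {1..n}" "?A \<inter> X B \<subseteq> {u, w}" for B w
    proof -
      have "card (?A \<inter> X B) \<le> card {u, w}" by (rule card_mono) (use that in auto)
      also have "\<dots> \<le> 2" by (simp add: card_insert_le_m1)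
      finally show ?thesis unfolding tm_def using s_pos[OF that(1)] by simp
    qed
    have s1: "?A \<inter> X B1 \<subseteq> {u, v1}" using nB1 by auto
    have s2: "?A \<inter> X B2 \<subseteq> {u, v2}" using nB2 by auto
    have s3: "?A \<inter> X B3 \<subseteq> {u, v3}" using nB3 by auto
    have "tm B1 \<le> 1" by (rule tmB[OF B1(1) s1])
    moreover have "tm B2 \<le> 1" by (rule tmB[OF B2(1) s2])
    moreover have "tm B3 \<le> 1" by (rule tmB[OF B3(1) s3])
    ultimately show ?thesis using tL by linarith
  qed
  finally show ?thesis .
qed

lemma size2:
  assumes L: "L \<in> {1..n}" "s L = 1" and u: "u \<in> E" "u \<notin> X L"
    and v0: "v0 \<in> X L" and h: "1 \<le> kap (col L) {u, v0}"
  shows "card (X L) \<le> 2"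
proof (rule ccontr)
  let ?j = "col L"
  have jk: "?j < k" using colp[OF L(1)] by blast
  assume "\<not> card (X L) \<le> 2"
  then have "3 \<le> card (X L)" by simp
  then obtain S where S: "S \<subseteq> X L" "card S = 3" by (meson obtain_subset_with_card_n)
  then obtain v1 v2 v3 where vs: "S = {v1, v2, v3}" "v1 \<noteq> v2" "v2 \<noteq> v3" "v1 \<noteq> v3"
    using card_3_iff by metis
  have v: "v1 \<in> X L" "v2 \<in> X L" "v3 \<in> X L" using S vs by auto
  have XE: "X L \<subseteq> E" using Xsub[OF L(1)] .
  have v0E: "v0 \<in> E" using v0 XE by auto
  have uv: "1 \<le> kap ?j {u, v}" if "v \<in> X L" for v
  proof (cases "v = v0")
    case True then show ?thesis using h by simp
  next
    case False
    have "kap ?j {v0, v} = max 0 (int (card {v0, v}) - s L)"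
      by (rule Kcol[OF L(1)]) (use v0 that in auto)
    then have "kap ?j {v0, v} = 1" using False L(2) by simp
    then show ?thesis
      using Ktrans[OF jk u(1) v0E, of v] that XE u v0 h False by auto
  qed
  have Bex: "\<exists>B\<in>{1..n}. u \<in> X B \<and> v \<in> X B \<and> s B = 1 \<and> col B = ?j" if "v \<in> X L" for v
    by (rule factP[OF jk u(1)]) (use that XE u uv in auto)
  obtain B1 where B1: "B1 \<in> {1..n}" "u \<in> X B1" "v1 \<in> X B1" "s B1 = 1" "col B1 = ?j"
    using Bex[OF v(1)] by blast
  obtain B2 where B2: "B2 \<in> {1..n}" "u \<in> X B2" "v2 \<in> X B2" "s B2 = 1" "col B2 = ?j"
    using Bex[OF v(2)] by blast
  obtain B3 where B3: "B3 \<in> {1..n}" "u \<in> X B3" "v3 \<in> X B3" "s B3 = 1" "col B3 = ?j"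
    using Bex[OF v(3)] by blast
  have B1L: "B1 \<noteq> L" using B1 u by auto
  have B2L: "B2 \<noteq> L" using B2 u by auto
  have B3L: "B3 \<noteq> L" using B3 u by auto
  have d12: "B1 \<noteq> B2" using pair_in[OF B1(1) L(1) B1L vs(2)] B1 B2 v by auto
  have d13: "B1 \<noteq> B3" using pair_in[OF B1(1) L(1) B1L vs(4)] B1 B3 v by auto
  have d23: "B2 \<noteq> B3" using pair_in[OF B2(1) L(1) B2L vs(3)] B2 B3 v by auto
  obtain g12 where g12: "g12 < k" "g12 \<noteq> ?j" "1 \<le> kap g12 {u, v1, v2}"
    using trip[OF L u v(1) v(2) vs(2) B1(1-4) B2(1-4) d12] by blast
  obtain g13 where g13: "g13 < k" "g13 \<noteq> ?j" "1 \<le> kap g13 {u, v1, v3}"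
    using trip[OF L u v(1) v(3) vs(4) B1(1-4) B3(1-4) d13] by blast
  obtain g23 where g23: "g23 < k" "g23 \<noteq> ?j" "1 \<le> kap g23 {u, v2, v3}"
    using trip[OF L u v(2) v(3) vs(3) B2(1-4) B3(1-4) d23] by blast
  have e1: "g12 \<noteq> g13"
  proof
    assume "g12 = g13"
    then show False
      using share[OF g12(1,2) L(1) u v(1) v(2) v(3) vs(2) vs(4) vs(3) B1(1-3) B1(5)] g12 g13 by simp
  qed
  have e2: "g12 \<noteq> g23"
  proof
    assume eq: "g12 = g23"
    have "{u, v1, v2} = {u, v2, v1}" by auto
    then show False
      using share[OF g12(1,2) L(1) u v(2) v(1) v(3) vs(2)[symmetric] vs(3) vs(4) B2(1-3) B2(5)] g12 g23 eq
      by simp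
  qed
  have e3: "g13 \<noteq> g23"
  proof
    assume eq: "g13 = g23"
    have "{u, v1, v3} = {u, v3, v1}" "{u, v2, v3} = {u, v3, v2}" by auto
    then show False
      using share[OF g13(1,2) L(1) u v(3) v(1) v(2) vs(4)[symmetric] vs(3)[symmetric] vs(2) B3(1-3) B3(5)] g13 g23 eq
      by simp
  qed
  let ?A = "{u, v1, v2, v3}"
  have AE: "?A \<subseteq> E" using u v XE by auto
  have kj: "3 \<le> kap ?j ?A"
  proof -
    have "kap ?j {v1, v2, v3} = max 0 (int (card {v1, v2, v3}) - s L)"
      by (rule Kcol[OF L(1)]) (use v in auto)
    then have k3: "kap ?j {v1, v2, v3} = 2" using vs L(2) by simp
    have "kap ?j {v1, v2, v3} + kap ?j {u, v1} \<le> kap ?j ({v1, v2, v3} \<union> {u, v1}) + kap ?j ({v1, v2, v3} \<inter> {u, v1})"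
      by (rule Ksup[OF jk]) (use AE in auto)
    moreover have "{v1, v2, v3} \<union> {u, v1} = ?A" by auto
    moreover have "{v1, v2, v3} \<inter> {u, v1} = {v1}" using u v by auto
    moreover have "kap ?j {v1} = 0" using Ksingle jk v XE by blast
    ultimately show ?thesis using k3 uv[OF v(1)] by simp
  qed
  have k12: "1 \<le> kap g12 ?A" using Kmono[OF g12(1), of "{u, v1, v2}" ?A] AE g12 by auto
  have k13: "1 \<le> kap g13 ?A" using Kmono[OF g13(1), of "{u, v1, v3}" ?A] AE g13 by auto
  have k23: "1 \<le> kap g23 ?A" using Kmono[OF g23(1), of "{u, v2, v3}" ?A] AE g23 by auto
  have "kap ?j ?A + kap g12 ?A + kap g13 ?A + kap g23 ?A = (\<Sum>g\<in>{?j, g12, g13, g23}. kap g ?A)"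
    using g12 g13 g23 e1 e2 e3 by simp
  also have "\<dots> \<le> (\<Sum>g<k. kap g ?A)"
    by (rule sum_mono2) (use jk g12 g13 g23 Knn AE in auto)
  also have "\<dots> = Ls ?A" by (rule Ksum[OF AE])
  also have "\<dots> \<le> 5" by (rule quad[OF L u(2) v vs(2) vs(4) vs(3) B1(1-3) B2(1-3) B3(1-3)])
  finally show False using kj k12 k13 k23 by simp
qed

lemma card_ge2:
  assumes m: "m \<in> {1..n}" "s m = 1"
  shows "2 \<le> card (X m)"
  using m tge1 unfolding s_def by force

lemma eq_pair:
  assumes "finite A" "card A \<le> 2" "a \<in> A" "b \<in> A" "a \<noteq> b"
  shows "A = {a, b}"
proof -
  have "{a, b} \<subseteq> A" using assms by auto
  moreover have "card A \<le> card {a, b}" using assms by simp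
  ultimately show ?thesis using card_seteq[OF assms(1)] by blast
qed

lemma NT:
  assumes m: "m \<in> {1..n}" "s m = 1" and m': "m' \<in> {1..n}" "s m' = 1" and d: "m \<noteq> m'"
    and c: "col m = col m'" and p: "p \<in> X m" "p \<in> X m'"
  shows False
proof -
  let ?j = "col m"
  have jk: "?j < k" using colp[OF m(1)] by blast
  have int: "X m \<inter> X m' = {p}" by (rule inter_single[OF m(1) m'(1) d p])
  obtain x where x: "x \<in> X m" "x \<noteq> p"
  proof -
    have "2 \<le> card (X m)" by (rule card_ge2[OF m])
    then have "\<not> X m \<subseteq> {p}" using card_mono[of "{p}" "X m"] by auto
    then show ?thesis using that by blast
  qed
  obtain y where y: "y \<in> X m'" "y \<noteq> p"
  proof -
    have "2 \<le> card (X m')" by (rule card_ge2[OF m'])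
    then have "\<not> X m' \<subseteq> {p}" using card_mono[of "{p}" "X m'"] by auto
    then show ?thesis using that by blast
  qed
  have ynm: "y \<notin> X m" using y int by auto
  have xnm: "x \<notin> X m'" using x int by auto
  have xy: "x \<noteq> y" using ynm x by auto
  have E3: "x \<in> E" "y \<in> E" "p \<in> E" using x y p Xsub m m' by auto
  have kxp: "kap ?j {x, p} = 1"
  proof -
    have "kap ?j {x, p} = max 0 (int (card {x, p}) - s m)" by (rule Kcol[OF m(1)]) (use x p in auto)
    then show ?thesis using x m by simp
  qed
  have kpy: "kap ?j {p, y} = 1"
  proof -
    have "kap (col m') {p, y} = max 0 (int (card {p, y}) - s m')" by (rule Kcol[OF m'(1)]) (use y p in auto)
    then show ?thesis using y m' c by simp
  qed
  have kxy: "1 \<le> kap ?j {x, y}"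
    by (rule Ktrans[OF jk E3(1) E3(3) E3(2)]) (use x y xy kxp kpy in auto)
  obtain B where B: "B \<in> {1..n}" "x \<in> X B" "y \<in> X B" "s B = 1" "col B = ?j"
    using factP[OF jk E3(1) E3(2) xy kxy] by blast
  have Xm: "X m = {p, x}"
  proof -
    have "{y, p} = {p, y}" by auto
    then have "1 \<le> kap (col m) {y, p}" using kpy by simp
    then have "card (X m) \<le> 2" by (rule size2[OF m E3(2) ynm p(1)])
    then show ?thesis using eq_pair[OF finX[OF m(1)] _ p(1) x(1)] x by auto
  qed
  have Xm': "X m' = {p, y}"
  proof -
    have "1 \<le> kap (col m') {x, p}" using kxp c by simp
    then have "card (X m') \<le> 2" by (rule size2[OF m' E3(1) xnm p(2)])
    then show ?thesis using eq_pair[OF finX[OF m'(1)] _ p(2) y(1)] y by auto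
  qed
  have pnB: "p \<notin> X B"
  proof
    assume pB: "p \<in> X B"
    have "B \<noteq> m" using B ynm by auto
    then show False using pair_in[OF B(1) m(1) _ x(2)[symmetric]] pB B x p by blast
  qed
  have XB: "X B = {x, y}"
  proof -
    have "{p, x} = {x, p}" by auto
    then have "1 \<le> kap (col B) {p, x}" using kxp B by simp
    then have "card (X B) \<le> 2" by (rule size2[OF B(1) B(4) E3(3) pnB B(2)])
    then show ?thesis using eq_pair[OF finX[OF B(1)] _ B(2) B(3) xy] by auto
  qed
  have "\<exists>a\<in>E. \<exists>b\<in>E. \<exists>c\<in>E. a \<noteq> b \<and> a \<noteq> c \<and> b \<noteq> c
                 \<and> (\<exists>i\<in>{1..n}. X i = {a, b}) \<and> (\<exists>i\<in>{1..n}. X i = {a, c})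
                 \<and> (\<exists>i\<in>{1..n}. X i = {b, c})"
    using E3 x(2) y(2) xy Xm Xm' XB m(1) m'(1) B(1) by metis
  then show False using H3 by blast
qed

lemma disj_sum:
  assumes g: "g < k" and fin: "finite M" and A: "A \<subseteq> E" and F: "\<forall>m\<in>M. F m \<subseteq> A"
    and dj: "\<forall>m\<in>M. \<forall>m'\<in>M. m \<noteq> m' \<longrightarrow> F m \<inter> F m' = {}"
  shows "(\<Sum>m\<in>M. kap g (F m)) \<le> kap g A"
proof -
  have "(\<Sum>m\<in>M. kap g (F m)) \<le> kap g (\<Union>m\<in>M. F m)"
    using fin F dj
  proof (induction M rule: finite_induct)
    case empty then show ?case using K0 by simp
  next
    case (insert m M)
    have IH: "(\<Sum>m\<in>M. kap g (F m)) \<le> kap g (\<Union>m\<in>M. F m)" using insert by auto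
    have FmE: "F m \<subseteq> E" using insert A by auto
    have UE: "(\<Union>m\<in>M. F m) \<subseteq> E" using insert A by auto
    have dis: "F m \<inter> (\<Union>m\<in>M. F m) = {}" using insert.prems(2) insert.hyps(2) by fastforce
    have "kap g (F m) + kap g (\<Union>m\<in>M. F m) \<le> kap g (F m \<union> (\<Union>m\<in>M. F m)) + kap g (F m \<inter> (\<Union>m\<in>M. F m))"
      by (rule Ksup[OF g FmE UE])
    then have "kap g (F m) + kap g (\<Union>m\<in>M. F m) \<le> kap g (\<Union>m\<in>insert m M. F m)"
      using dis K0 by simp
    then show ?case using IH insert.hyps by simp
  qed
  also have "\<dots> \<le> kap g A" by (rule Kmono[OF g _ A]) (use F in auto)
  finally show ?thesis .
qed

lemma core:
  assumes i: "i \<in> {1..n}" and l: "l \<in> {1..n}" "i \<noteq> l" and e: "e \<in> X i" "e \<in> X l"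
    and c: "col i = col l"
    and P: "P \<subseteq> X i - {e}" "int (card P) = s i" and Q: "Q \<subseteq> X l - {e}" "int (card Q) = s l"
    and noj: "\<not> (\<exists>m\<in>{1..n}. s m = 1 \<and> X m \<inter> P \<noteq> {} \<and> X m \<inter> Q \<noteq> {} \<and> col m = col i)"
  shows False
proof -
  let ?j = "col i"
  have jk: "?j < k" using colp[OF i] by blast
  have int: "X i \<inter> X l = {e}" by (rule inter_single[OF i l e])
  have finP: "finite P" using P finX[OF i] finite_subset by blast
  have finQ: "finite Q" using Q finX[OF l(1)] finite_subset by blast
  have PQ: "P \<inter> Q = {}" using P Q int by auto
  have QXi: "Q \<inter> X i = {}" using Q int by auto
  have PXl: "P \<inter> X l = {}" using P int by auto
  let ?A = "P \<union> Q"
  have AE: "?A \<subseteq> E" using P Q Xsub i l by auto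
  have eE: "e \<in> E" using e Xsub i by auto
  have eP: "e \<notin> P" "e \<notin> Q" using P Q by auto
  have kA: "1 \<le> kap ?j ?A"
  proof -
    have "kap ?j (insert e P) = max 0 (int (card (insert e P)) - s i)" by (rule Kcol[OF i]) (use P e in auto)
    then have k1: "kap ?j (insert e P) = 1" using finP eP P by simp
    have "kap (col l) (insert e Q) = max 0 (int (card (insert e Q)) - s l)" by (rule Kcol[OF l(1)]) (use Q e in auto)
    then have k2: "kap ?j (insert e Q) = 1" using finQ eP Q c by simp
    have s0: "kap ?j (insert e P) + kap ?j (insert e Q) \<le> kap ?j (insert e P \<union> insert e Q) + kap ?j (insert e P \<inter> insert e Q)"
      by (rule Ksup[OF jk]) (use AE eE in auto)
    have eq1: "insert e P \<union> insert e Q = insert e ?A" by auto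
    have eq2: "insert e P \<inter> insert e Q = {e}" using PQ by auto
    from s0 have "kap ?j (insert e P) + kap ?j (insert e Q) \<le> kap ?j (insert e ?A) + kap ?j {e}"
      unfolding eq1 eq2 .
    moreover have "kap ?j {e} = 0" using Ksingle eE jk by blast
    moreover have "kap ?j (insert e ?A) \<le> kap ?j ?A + 1" by (rule Kunit[OF jk AE eE])
    ultimately show ?thesis using k1 k2 by linarith
  qed
  define TC where "TC = {m \<in> {1..n}. s m = 1 \<and> X m \<inter> P \<noteq> {} \<and> X m \<inter> Q \<noteq> {}}"
  have TCV: "TC \<subseteq> {1..n}" unfolding TC_def by auto
  have finTC: "finite TC" using TCV finite_subset by blast
  have cP: "card (P \<inter> X m) \<le> 1" if "m \<in> {1..n}" "m \<noteq> i" for m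
  proof -
    have "card (P \<inter> X m) \<le> card (X i \<inter> X m)" by (rule card_mono) (use finX[OF i] P in auto)
    also have "\<dots> \<le> 1" using H2 i that by auto
    finally show ?thesis .
  qed
  have cQ: "card (Q \<inter> X m) \<le> 1" if "m \<in> {1..n}" "m \<noteq> l" for m
  proof -
    have "card (Q \<inter> X m) \<le> card (X l \<inter> X m)" by (rule card_mono) (use finX[OF l(1)] Q in auto)
    also have "\<dots> \<le> 1" using H2 l that by auto
    finally show ?thesis .
  qed
  have cA: "card (?A \<inter> X m) \<le> card (P \<inter> X m) + card (Q \<inter> X m)" for m
  proof -
    have "?A \<inter> X m = (P \<inter> X m) \<union> (Q \<inter> X m)" by auto
    then show ?thesis using card_Un_le by metis
  qed
  have iTC: "i \<notin> TC" "l \<notin> TC" unfolding TC_def using QXi PXl by auto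
  have tmle: "max 0 (int (card (?A \<inter> X m)) - s m) \<le> (if m \<in> TC then 1 else 0)" if m: "m \<in> {1..n}" for m
  proof (cases "m = i")
    case True
    have "?A \<inter> X m = P" using True P QXi by auto
    then show ?thesis using True iTC P by simp
  next
    case mi: False
    show ?thesis
    proof (cases "m = l")
      case True
      have "?A \<inter> X m = Q" using True Q PXl by auto
      then show ?thesis using True iTC Q by simp
    next
      case ml: False
      have c2: "card (?A \<inter> X m) \<le> 2" using cA[of m] cP[OF m mi] cQ[OF m ml] by simp
      show ?thesis
      proof (cases "m \<in> TC")
        case True
        then have "s m = 1" unfolding TC_def by auto
        then show ?thesis using c2 True by simp
      next
        case False
        have "int (card (?A \<inter> X m)) \<le> s m"
        proof (cases "s m = 1")
          case True
          then have "X m \<inter> P = {} \<or> X m \<inter> Q = {}" using False m unfolding TC_def by auto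
          then have "card (P \<inter> X m) = 0 \<or> card (Q \<inter> X m) = 0" by (auto simp: Int_commute)
          then have "card (?A \<inter> X m) \<le> 1" using cA[of m] cP[OF m mi] cQ[OF m ml] by linarith
          then show ?thesis using True by simp
        next
          case False
          then have "2 \<le> s m" using s_pos[OF m] by simp
          then show ?thesis using c2 by simp
        qed
        then show ?thesis using False by simp
      qed
    qed
  qed
  have upper: "Ls ?A \<le> int (card TC)"
  proof -
    have "Ls ?A \<le> (\<Sum>m\<in>{1..n}. if m \<in> TC then 1 else 0)"
      unfolding Ls_def by (rule sum_mono) (rule tmle)
    also have "\<dots> = (\<Sum>m\<in>{1..n} \<inter> TC. 1)" by (rule sum.inter_restrict[symmetric]) simp
    also have "{1..n} \<inter> TC = TC" using TCV by auto
    finally show ?thesis by simp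
  qed
  have lowg: "int (card {m. m \<in> TC \<and> col m = g}) + (if g = ?j then 1 else 0) \<le> kap g ?A" if g: "g < k" for g
  proof (cases "g = ?j")
    case True
    have "{m. m \<in> TC \<and> col m = g} = {}" using noj True unfolding TC_def by auto
    then have "card {m. m \<in> TC \<and> col m = g} = 0" by (simp only: card.empty)
    then show ?thesis using True kA by (simp only:) simp
  next
    case False
    let ?M = "{m. m \<in> TC \<and> col m = g}"
    have finM: "finite ?M" using finTC by simp
    have one: "1 \<le> kap g (?A \<inter> X m)" if mM: "m \<in> ?M" for m
    proof -
      have m: "m \<in> {1..n}" "s m = 1" "X m \<inter> P \<noteq> {}" "X m \<inter> Q \<noteq> {}" "col m = g"
        using mM unfolding TC_def by auto
      obtain p where p: "p \<in> X m" "p \<in> P" using m(3) by blast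
      obtain q where q: "q \<in> X m" "q \<in> Q" using m(4) by blast
      have pq: "p \<noteq> q" using p q PQ by auto
      have "{p, q} \<subseteq> ?A \<inter> X m" using p q by auto
      then have "card {p, q} \<le> card (?A \<inter> X m)" by (rule card_mono[rotated]) (use finX[OF m(1)] in auto)
      then have "2 \<le> card (?A \<inter> X m)" using pq by simp
      moreover have "kap (col m) (?A \<inter> X m) = max 0 (int (card (?A \<inter> X m)) - s m)"
        by (rule Kcol[OF m(1)]) auto
      ultimately show ?thesis using m by simp
    qed
    have "(\<Sum>m\<in>?M. (1::int)) \<le> (\<Sum>m\<in>?M. kap g (?A \<inter> X m))"
      by (rule sum_mono) (rule one)
    also have "\<dots> \<le> kap g ?A"
    proof (rule disj_sum[OF g finM AE])
      show "\<forall>m\<in>?M. ?A \<inter> X m \<subseteq> ?A" by auto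
      show "\<forall>m\<in>?M. \<forall>m'\<in>?M. m \<noteq> m' \<longrightarrow> ?A \<inter> X m \<inter> (?A \<inter> X m') = {}"
      proof (intro ballI impI)
        fix m m' assume mM: "m \<in> ?M" and mM': "m' \<in> ?M" and ne: "m \<noteq> m'"
        show "?A \<inter> X m \<inter> (?A \<inter> X m') = {}"
        proof (rule ccontr)
          assume "?A \<inter> X m \<inter> (?A \<inter> X m') \<noteq> {}"
          then obtain p where "p \<in> X m" "p \<in> X m'" by blast
          moreover have "m \<in> {1..n}" "s m = 1" "col m = g" "m' \<in> {1..n}" "s m' = 1" "col m' = g"
            using mM mM' unfolding TC_def by auto
          ultimately show False using NT[of m m' p] ne by auto
        qed
      qed
    qed
    finally show ?thesis using False by simp
  qed
  have "(\<Sum>g<k. int (card {m. m \<in> TC \<and> col m = g}) + (if g = ?j then 1 else 0)) \<le> (\<Sum>g<k. kap g ?A)"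
    by (rule sum_mono) (use lowg in auto)
  moreover have "(\<Sum>g<k. int (card {m. m \<in> TC \<and> col m = g})) = int (card TC)"
  proof -
    have "(\<Sum>g<k. card {m. m \<in> TC \<and> col m = g}) = (\<Sum>g<k. \<Sum>m\<in>{m. m \<in> TC \<and> col m = g}. (1::nat))"
      by simp
    also have "\<dots> = (\<Sum>m\<in>TC. (1::nat))"
      by (rule sum.group[OF finTC]) (use colp TCV in force)+
    finally show ?thesis by (simp add: of_nat_sum[symmetric])
  qed
  moreover have "(\<Sum>g<k. (if g = ?j then 1 else 0::int)) = 1" using jk by simp
  ultimately have "int (card TC) + 1 \<le> (\<Sum>g<k. kap g ?A)" by (simp add: sum.distrib)
  then show False using Ksum[OF AE] upper by simp
qed

lemma getP:
  assumes i: "i \<in> {1..n}" and e: "e \<in> X i"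
  obtains P where "P \<subseteq> X i - {e}" "int (card P) = s i"
proof -
  have c: "card (X i - {e}) = card (X i) - 1" using e finX[OF i] by simp
  have "1 \<le> t i" using tge1 i by auto
  moreover have "1 \<le> s i" using s_pos[OF i] .
  ultimately have "nat (s i) \<le> card (X i - {e})" using c e finX[OF i] unfolding s_def
    by (simp add: card_gt_0_iff)
  then obtain P where "P \<subseteq> X i - {e}" "card P = nat (s i)" by (meson obtain_subset_with_card_n)
  moreover have "0 \<le> s i" using s_pos[OF i] by simp
  ultimately show ?thesis using that by simp
qed

lemma conflict_tight:
  assumes i: "i \<in> {1..n}" and l: "l \<in> {1..n}" "i \<noteq> l" and e: "e \<in> X i" "e \<in> X l"
    and c: "col i = col l" and sl: "s l = 1"
  shows False
proof -
  have int: "X i \<inter> X l = {e}" by (rule inter_single[OF i l e])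
  obtain P where P: "P \<subseteq> X i - {e}" "int (card P) = s i" using getP[OF i e(1)] by blast
  obtain q where q: "q \<in> X l" "q \<noteq> e"
  proof -
    have "2 \<le> card (X l)" by (rule card_ge2[OF l(1) sl])
    then have "\<not> X l \<subseteq> {e}" using card_mono[of "{e}" "X l"] by auto
    then show ?thesis using that by blast
  qed
  show False
  proof (rule core[OF i l e c P])
    show "{q} \<subseteq> X l - {e}" using q by auto
    show "int (card {q}) = s l" using sl by simp
    show "\<not> (\<exists>m\<in>{1..n}. s m = 1 \<and> X m \<inter> P \<noteq> {} \<and> X m \<inter> {q} \<noteq> {} \<and> col m = col i)"
    proof
      assume "\<exists>m\<in>{1..n}. s m = 1 \<and> X m \<inter> P \<noteq> {} \<and> X m \<inter> {q} \<noteq> {} \<and> col m = col i"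
      then obtain m where m: "m \<in> {1..n}" "s m = 1" "X m \<inter> P \<noteq> {}" "q \<in> X m" "col m = col i" by blast
      have "m \<noteq> l"
      proof
        assume "m = l"
        then have "X l \<inter> P \<noteq> {}" using m by simp
        then show False using P int by auto
      qed
      then show False using NT[OF m(1,2) l(1) sl _ _ m(4) q(1)] m c by auto
    qed
  qed
qed

lemma conflict:
  assumes i: "i \<in> {1..n}" and l: "l \<in> {1..n}" "i \<noteq> l" and e: "e \<in> X i" "e \<in> X l"
    and c: "col i = col l"
  shows False
proof -
  have int: "X i \<inter> X l = {e}" by (rule inter_single[OF i l e])
  obtain P where P: "P \<subseteq> X i - {e}" "int (card P) = s i" using getP[OF i e(1)] by blast
  obtain Q where Q: "Q \<subseteq> X l - {e}" "int (card Q) = s l" using getP[OF l(1) e(2)] by blast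
  show False
  proof (cases "\<exists>m\<in>{1..n}. s m = 1 \<and> X m \<inter> P \<noteq> {} \<and> X m \<inter> Q \<noteq> {} \<and> col m = col i")
    case True
    then obtain m where m: "m \<in> {1..n}" "s m = 1" "X m \<inter> P \<noteq> {}" "X m \<inter> Q \<noteq> {}" "col m = col i"
      by blast
    obtain p where p: "p \<in> X m" "p \<in> P" using m(3) by blast
    have "m \<noteq> i"
    proof
      assume "m = i"
      then have "X i \<inter> Q \<noteq> {}" using m by simp
      then show False using Q int by auto
    qed
    then show False using conflict_tight[OF i m(1) _ _ p(1) _ m(2)] p P m by auto
  next
    case False
    then show False by (rule core[OF i l e c P Q])
  qed
qed

lemma col_proper:
  assumes "i \<in> {1..n}" "l \<in> {1..n}" "line_graph_adj X i l"
  shows "col i \<noteq> col l"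
proof
  assume c: "col i = col l"
  obtain e where "e \<in> X i" "e \<in> X l" "i \<noteq> l" using assms(3) unfolding line_graph_adj_def by blast
  then show False using conflict[OF assms(1) assms(2) _ _ _ c] by blast
qed

end

context hsetup
begin

lemma rho_single:
  assumes e: "e \<in> E"
  shows "truncated_rho n X t {e} = int (hdeg n X e)"
proof -
  have "truncated_rho n X t {e} = (\<Sum>m\<in>{1..n}. if e \<in> X m then 1 else 0)"
    unfolding truncated_rho_def
  proof (rule sum.cong)
    fix m assume m: "m \<in> {1..n}"
    have "1 \<le> t m" using tge1 m by auto
    then show "min (int (card ({e} \<inter> X m))) (t m) = (if e \<in> X m then 1 else 0)" by auto
  qed simp
  also have "\<dots> = (\<Sum>m\<in>{1..n} \<inter> {m. e \<in> X m}. 1)" by (subst sum.inter_restrict) auto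
  also have "{1..n} \<inter> {m. e \<in> X m} = {m \<in> {1..n}. e \<in> X m}" by auto
  finally show ?thesis unfolding hdeg_def by simp
qed

lemma singleton_case:
  assumes crit: "critical (k + 1) {1..n} (line_graph_adj X)"
    and inD: "in_D k E (truncated_rho n X t)"
    and i: "i \<in> {1..n}" and ci: "card (X i) = 1"
  shows False
proof -
  obtain e where Xi: "X i = {e}" using ci card_1_singletonE by blast
  have eE: "e \<in> E" using Xsub[OF i] Xi by auto
  obtain r where r: "\<forall>j<k. matroid_rank E (r j)" "\<forall>Z. Z \<subseteq> E \<longrightarrow> truncated_rho n X t Z = (\<Sum>j<k. r j Z)"
    using inD unfolding in_D_def by blast
  have "truncated_rho n X t {e} = (\<Sum>j<k. r j {e})" using r(2) eE by auto
  also have "\<dots> \<le> (\<Sum>j<k. 1)"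
  proof (rule sum_mono)
    fix j assume "j \<in> {..<k}"
    then have "matroid_rank E (r j)" using r(1) by blast
    then have "r j {e} \<le> int (card {e})" by (rule mr_card) (use eE in simp)
    then show "r j {e} \<le> 1" by simp
  qed
  finally have hk: "hdeg n X e \<le> k" using rho_single[OF eE] by simp
  obtain l where l: "l \<in> {1..n}" "l \<noteq> i" "e \<in> X l"
  proof -
    obtain a b where "a \<in> {1..n}" "b \<in> {1..n}" "a \<noteq> b" "e \<in> X a" "e \<in> X b" using two_edges[OF eE] by blast
    then show ?thesis using that by (cases "a = i") auto
  qed
  have adj: "line_graph_adj X i l" unfolding line_graph_adj_def using l Xi by auto
  let ?G = "delete_edge (line_graph_adj X) i l"
  have ch: "chromatic_number {1..n} ?G = k" using crit i l adj unfolding critical_def by auto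
  have "colourable {1..n} ?G (Suc n)"
    by (rule colourable_id) (auto simp: delete_edge_def line_graph_adj_def)
  from colourable_chromatic[OF this] ch have "colourable {1..n} ?G k" by simp
  then obtain f where f: "\<forall>v\<in>{1..n}. f v < k" "\<forall>u\<in>{1..n}. \<forall>v\<in>{1..n}. ?G u v \<longrightarrow> f u \<noteq> f v"
    unfolding colourable_def by blast
  define N where "N = {m \<in> {1..n}. e \<in> X m}"
  have cN: "card N \<le> k" using hk unfolding N_def hdeg_def .
  have iN: "i \<in> N" using i Xi unfolding N_def by auto
  have finN: "finite N" unfolding N_def by simp
  have "card (f ` (N - {i})) \<le> card (N - {i})" by (rule card_image_le) (use finN in simp)
  also have "\<dots> < k" using cN iN finN card_Diff1_less[OF finN iN] by linarith
  finally have "card (f ` (N - {i})) < card {..<k}" by simp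
  then have "\<not> {..<k} \<subseteq> f ` (N - {i})" using card_mono[of "f ` (N - {i})" "{..<k}"] finN by auto
  then obtain c where c: "c < k" "c \<notin> f ` (N - {i})" by blast
  define g where "g = f(i := c)"
  have "colourable {1..n} (line_graph_adj X) k"
    unfolding colourable_def
  proof (intro exI[of _ g] conjI ballI impI)
    fix v assume "v \<in> {1..n}" then show "g v < k" using f c unfolding g_def by auto
  next
    fix u v assume u: "u \<in> {1..n}" and v: "v \<in> {1..n}" and a: "line_graph_adj X u v"
    have uv: "u \<noteq> v" using a unfolding line_graph_adj_def by auto
    show "g u \<noteq> g v"
    proof (cases "u = i")
      case True
      then have "e \<in> X v" using a Xi unfolding line_graph_adj_def by auto
      then have "v \<in> N - {i}" using v uv True unfolding N_def by auto
      then show ?thesis using True uv c unfolding g_def by auto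
    next
      case ui: False
      show ?thesis
      proof (cases "v = i")
        case True
        then have "e \<in> X u" using a Xi unfolding line_graph_adj_def by auto
        then have "u \<in> N - {i}" using u uv True unfolding N_def by auto
        then show ?thesis using True uv c unfolding g_def by auto
      next
        case vi: False
        have "{u, v} \<noteq> {i, l}" using ui vi by (auto simp: doubleton_eq_iff)
        then have "?G u v" using a unfolding delete_edge_def by auto
        then show ?thesis using f u v ui vi unfolding g_def by auto
      qed
    qed
  qed
  then have "chromatic_number {1..n} (line_graph_adj X) \<le> k" by (rule chromatic_le)
  then show False using crit unfolding critical_def by simp
qed

end

theorem corollary2p11:
  fixes E :: "'a set" and n k :: nat and X :: "nat \<Rightarrow> 'a set" and t :: "nat \<Rightarrow> int"
  assumes hyp: "hypergraph E n X"
    and t_range: "\<forall>i\<in>{1..n}. 0 \<le> t i \<and> t i \<le> int (card (X i))"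
    and H1: "\<forall>e\<in>E. hdeg n X e \<ge> 2"
    and H2: "\<forall>i\<in>{1..n}. \<forall>j\<in>{1..n}. i \<noteq> j \<longrightarrow> card (X i \<inter> X j) \<le> 1"
    and H3: "\<not> (\<exists>a\<in>E. \<exists>b\<in>E. \<exists>c\<in>E. a \<noteq> b \<and> a \<noteq> c \<and> b \<noteq> c
                 \<and> (\<exists>i\<in>{1..n}. X i = {a, b}) \<and> (\<exists>i\<in>{1..n}. X i = {a, c})
                 \<and> (\<exists>i\<in>{1..n}. X i = {b, c}))"
    and T: "\<forall>i\<in>{1..n}. t i = 1 \<or>
              (int (Min (hdeg n X ` X i)) \<le> t i \<and> t i < int (card (X i)))"
    and crit: "critical (k + 1) {1..n} (line_graph_adj X)"
  shows "excluded_minor_D k E (truncated_rho n X t)"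
proof -
  have Xs: "\<forall>i\<in>{1..n}. X i \<noteq> {} \<and> X i \<subseteq> E" and finE: "finite E"
    using hyp unfolding hypergraph_def by auto
  have tge1: "\<forall>i\<in>{1..n}. 1 \<le> t i"
  proof
    fix i assume i: "i \<in> {1..n}"
    show "1 \<le> t i"
    proof (cases "t i = 1")
      case True then show ?thesis by simp
    next
      case False
      then have Mt: "int (Min (hdeg n X ` X i)) \<le> t i" using T i by auto
      have fin: "finite (hdeg n X ` X i)" using Xs i finE finite_subset by blast
      have ne: "hdeg n X ` X i \<noteq> {}" using Xs i by auto
      obtain x where x: "x \<in> X i" "Min (hdeg n X ` X i) = hdeg n X x"
        using Min_in[OF fin ne] by auto
      have "x \<in> E" using x Xs i by auto
      then have "2 \<le> hdeg n X x" using H1 by auto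
      then show ?thesis using Mt x by simp
    qed
  qed
  interpret hs: hsetup E n X t
    by unfold_locales (use hyp tge1 H1 H2 in auto)
  show ?thesis
    unfolding excluded_minor_D_def
  proof (intro conjI allI impI)
    show "polymatroid E (truncated_rho n X t)" by (rule hs.rho_poly)
  next
    fix A B assume "A \<subseteq> E \<and> B \<subseteq> E \<and> A \<inter> B = {} \<and> A \<union> B \<noteq> {}"
    then show "in_D k (E - A - B) (minor_fun (truncated_rho n X t) B)"
      using hs.minors_in_D[OF crit] by blast
  next
    show "\<not> in_D k E (truncated_rho n X t)"
    proof
      assume inD: "in_D k E (truncated_rho n X t)"
      show False
      proof (cases "\<exists>i\<in>{1..n}. card (X i) = 1")
        case True
        then obtain i where "i \<in> {1..n}" "card (X i) = 1" by blast
        then show False using hs.singleton_case[OF crit inD] by blast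
      next
        case False
        have tlt: "\<forall>i\<in>{1..n}. t i < int (card (X i))"
        proof
          fix i assume i: "i \<in> {1..n}"
          have fXi: "finite (X i)" using Xs i finE finite_subset by blast
          have "X i \<noteq> {}" using Xs i by blast
          then have "card (X i) \<noteq> 0" using fXi by simp
          moreover have "card (X i) \<noteq> 1" using False i by blast
          ultimately have "2 \<le> card (X i)" by linarith
          moreover have "t i = 1 \<or> t i < int (card (X i))" using T i by blast
          ultimately show "t i < int (card (X i))" by linarith
        qed
        obtain r where r: "\<forall>j<k. matroid_rank E (r j)"
          and dec: "\<forall>Z. Z \<subseteq> E \<longrightarrow> truncated_rho n X t Z = (\<Sum>j<k. r j Z)"
          using inD unfolding in_D_def by blast
        interpret dc: decomp E n X t k r
          by unfold_locales (use hyp tge1 H1 H2 tlt r dec H3 in auto)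
        have "colourable {1..n} (line_graph_adj X) k"
          unfolding colourable_def
        proof (intro exI[of _ dc.col] conjI ballI impI)
          fix v assume "v \<in> {1..n}" then show "dc.col v < k" using dc.colp by blast
        next
          fix u v assume "u \<in> {1..n}" "v \<in> {1..n}" "line_graph_adj X u v"
          then show "dc.col u \<noteq> dc.col v" by (rule dc.col_proper)
        qed
        then have "chromatic_number {1..n} (line_graph_adj X) \<le> k" by (rule chromatic_le)
        then show False using crit unfolding critical_def by simp
      qed
    qed
  qed
qed


end
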